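(* Let $L=\langle S,A,\to\rangle$ be a labelled transition system. For all $x,y\in\{o,b\}$ and all states $s,t\in S$, we have $s \mathrel{\underline{\leftrightarrow}}_{(x,y)} t$ (i.e. $s$ and $t$ are $(x,y)$-generic bisimilar) if and only if $s \equiv_{E(x,y)} t$ (i.e. Duplicator wins the $E(x,y)$-generic bisimulation game from $\langle (s,t),\dagger,\dagger,*\rangle_S$).
   Context: A labelled transition system (LTS) is $L=\langle S,A,\to\rangle$ with $S$ a set of states, $A$ a set of actions containing a special internal action $\tau$, and $\to\subseteq S\times A\times S$; write $s\xrightarrow{a}t$ for $(s,a,t)\in\to$. Let $\twoheadrightarrow$ be the reflexive-transitive closure of $\xrightarrow{\tau}$. Generic bisimulation. For $R\subseteq S\times S$ and $s,s',t\in S$: $s\twoheadrightarrow_{o,R,t}s'$ iff $s\twoheadrightarrow s'$; $s\twoheadrightarrow_{b,R,t}s'$ iff $s\twoheadrightarrow s'$, $t\,R\,s$ and $t\,R\,s'$. For $x,y\in\{o,b\}$, a symmetric relation $R\subseteq S\times S$ is an $(x,y)$-generic bisimulation if whenever $s\,R\,t$ and $s\xrightarrow{a}s'$, either (i) $a=\tau$ and $s'\,R\,t$, or (ii) there exist $t',t_1,t_2$ with $t\twoheadrightarrow_{x,R,s}t_1\xrightarrow{a}t_2\twoheadrightarrow_{y,R,s'}t'$ and $s'\,R\,t'$. Write $s\mathrel{\underline{\leftrightarrow}}_{(x,y)}t$ iff some $(x,y)$-generic bisimulation relates $s$ and $t$. Generic bisimulation game. Let $\frown,\smile$ be two formal tags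 and $E\subseteq\{\frown,\smile\}$. The $E$-generic bisimulation game on $L$ is played by Spoiler and Duplicator on Spoiler-owned configurations $\langle (s,t),c,m,r\rangle_S$ and Duplicator-owned configurations $\langle (s,t),c,m,r\rangle_D$, where $(s,t)\in S\times S$, $c\in (A\times S)\cup\{\dagger\}$ (challenge), $m\in (S\times\{\frown,\smile\})\cup\{\dagger\}$ (partial match), $r\in\{*,\checkmark\}$ (reward). From $\langle (s,t),c,m,r\rangle_S$ Spoiler may: (S1) move to $\langle (s,t),c,m,*\rangle_D$ if $c\neq\dagger$; (S2a) for some $s\xrightarrow{a}s'$, move to $\langle (s,t),(a,s'),(t,\frown),*\rangle_D$ if $c=\dagger$; (S2b) for some $s\xrightarrow{a}s'$, move to $\langle (s,t),(a,s'),(t,\frown),\checkmark\rangle_D$ if $c\neq (a,s')$; (S3) for some $t\xrightarrow{a}t'$, move to $\langle (t,s),(a,t'),(s,\frown),\checkmark\rangle_D$. From $\langle (u,v),(a,u'),(\bar v,f),r\rangle_D$ Duplicator may: (D1) move to $\langle (u',\bar v),\dagger,\dagger,\checkmark\rangle_S$ if $a=\tau$; (D2) if $f=\frown$ and $\bar v\xrightarrow{a}v'$: (a) move to $\langle (u',v'),(a,u'),(v',\smile),*\rangle_S$, or (b) move to $\langle (u',v'),\dagger,\dagger,\checkmark\rangle_S$, or (c) only if $\smile\in E$, move to $\langle (u,v),(a,u'),(v',\smile),*\rangle_S$; (D3) for some $\bar v\xrightarrow{\tau}v'$: (a) move to $\langle (u,v'),(a,u'),(v',f),*\rangle_S$,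 or (b) only if $f=\smile$, move to $\langle (u',v'),\dagger,\dagger,\checkmark\rangle_S$, or (c) only if $f\in E$, move to $\langle (u,v),(a,u'),(v',f),*\rangle_S$. Duplicator wins a finite play if Spoiler gets stuck, and an infinite play if it contains infinitely many configurations with reward $\checkmark$; all other plays are won by Spoiler. A player wins a configuration if she has a strategy that wins all plays starting in it. Write $s\equiv_E t$ iff Duplicator wins $\langle (s,t),\dagger,\dagger,*\rangle_S$. $E(x,y)$ is the smallest set such that $\frown\in E(o,y)$ and $\smile\in E(x,o)$ for all $x,y\in\{o,b\}$; thus $E(b,b)=\emptyset$, $E(o,b)=\{\frown\}$, $E(b,o)=\{\smile\}$, $E(o,o)=\{\frown,\smile\}$. *)

theory Defs
  imports Main
begin

text \<open>An LTS over states of type 's and actions of type 'a is given by a transition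
  predicate tr (tr s a t means s -a-> t) together with the designated internal
  action tau.  The state set S is the whole type 's.\<close>

definition tau_steps :: "('s \<Rightarrow> 'a \<Rightarrow> 's \<Rightarrow> bool) \<Rightarrow> 'a \<Rightarrow> 's \<Rightarrow> 's \<Rightarrow> bool" where
  "tau_steps tr tau = (\<lambda>u v. tr u tau v)\<^sup>*\<^sup>*"

datatype mode = Mo | Mb

text \<open>gstep tr tau x R t s s' stands for  s \<twoheadrightarrow>_{x,R,t} s'.\<close>
definition gstep :: "('s \<Rightarrow> 'a \<Rightarrow> 's \<Rightarrow> bool) \<Rightarrow> 'a \<Rightarrow> mode \<Rightarrow> ('s \<Rightarrow> 's \<Rightarrow> bool)
    \<Rightarrow> 's \<Rightarrow> 's \<Rightarrow> 's \<Rightarrow> bool" where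
  "gstep tr tau x R t s s' =
     (case x of
        Mo \<Rightarrow> tau_steps tr tau s s'
      | Mb \<Rightarrow> tau_steps tr tau s s' \<and> R t s \<and> R t s')"

definition generic_bisim :: "('s \<Rightarrow> 'a \<Rightarrow> 's \<Rightarrow> bool) \<Rightarrow> 'a \<Rightarrow> mode \<Rightarrow> mode
    \<Rightarrow> ('s \<Rightarrow> 's \<Rightarrow> bool) \<Rightarrow> bool" where
  "generic_bisim tr tau x y R \<longleftrightarrow>
     symp R \<and>
     (\<forall>s t a s'. R s t \<and> tr s a s' \<longrightarrow>
        (a = tau \<and> R s' t) \<or>
        (\<exists>t' t1 t2. gstep tr tau x R s t t1 \<and> tr t1 a t2 \<and>
                    gstep tr tau y R s' t2 t' \<and> R s' t'))"

definition gbisimilar :: "('s \<Rightarrow> 'a \<Rightarrow> 's \<Rightarrow> bool) \<Rightarrow> 'a \<Rightarrow> mode \<Rightarrow> mode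
    \<Rightarrow> 's \<Rightarrow> 's \<Rightarrow> bool" where
  "gbisimilar tr tau x y s t \<longleftrightarrow> (\<exists>R. generic_bisim tr tau x y R \<and> R s t)"

datatype tag = Frown | Smile
datatype reward = Star | Tick
datatype player = Spo | Dup

text \<open>Conf p (s,t) c m r is the configuration <(s,t),c,m,r> owned by p; None encodes dagger.\<close>
datatype ('s, 'a) conf =
  Conf player "'s \<times> 's" "('a \<times> 's) option" "('s \<times> tag) option" reward

fun owner :: "('s, 'a) conf \<Rightarrow> player" where
  "owner (Conf p _ _ _ _) = p"

fun rew :: "('s, 'a) conf \<Rightarrow> reward" where
  "rew (Conf _ _ _ _ r) = r"

inductive gmove :: "('s \<Rightarrow> 'a \<Rightarrow> 's \<Rightarrow> bool) \<Rightarrow> 'a \<Rightarrow> tag set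
    \<Rightarrow> ('s, 'a) conf \<Rightarrow> ('s, 'a) conf \<Rightarrow> bool"
  for tr :: "'s \<Rightarrow> 'a \<Rightarrow> 's \<Rightarrow> bool" and tau :: 'a and E :: "tag set" where
  S1: "c \<noteq> None \<Longrightarrow> gmove tr tau E (Conf Spo (s,t) c m r) (Conf Dup (s,t) c m Star)"
| S2a: "tr s a s' \<Longrightarrow> c = None \<Longrightarrow>
      gmove tr tau E (Conf Spo (s,t) c m r) (Conf Dup (s,t) (Some (a,s')) (Some (t,Frown)) Star)"
| S2b: "tr s a s' \<Longrightarrow> c \<noteq> Some (a,s') \<Longrightarrow>
      gmove tr tau E (Conf Spo (s,t) c m r) (Conf Dup (s,t) (Some (a,s')) (Some (t,Frown)) Tick)"
| S3: "tr t a t' \<Longrightarrow>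
      gmove tr tau E (Conf Spo (s,t) c m r) (Conf Dup (t,s) (Some (a,t')) (Some (s,Frown)) Tick)"
| D1: "a = tau \<Longrightarrow>
      gmove tr tau E (Conf Dup (u,v) (Some (a,u')) (Some (vb,f)) r) (Conf Spo (u',vb) None None Tick)"
| D2a: "f = Frown \<Longrightarrow> tr vb a v' \<Longrightarrow>
      gmove tr tau E (Conf Dup (u,v) (Some (a,u')) (Some (vb,f)) r)
                        (Conf Spo (u',v') (Some (a,u')) (Some (v',Smile)) Star)"
| D2b: "f = Frown \<Longrightarrow> tr vb a v' \<Longrightarrow>
      gmove tr tau E (Conf Dup (u,v) (Some (a,u')) (Some (vb,f)) r) (Conf Spo (u',v') None None Tick)"
| D2c: "f = Frown \<Longrightarrow> tr vb a v' \<Longrightarrow> Smile \<in> E \<Longrightarrow>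
      gmove tr tau E (Conf Dup (u,v) (Some (a,u')) (Some (vb,f)) r)
                        (Conf Spo (u,v) (Some (a,u')) (Some (v',Smile)) Star)"
| D3a: "tr vb tau v' \<Longrightarrow>
      gmove tr tau E (Conf Dup (u,v) (Some (a,u')) (Some (vb,f)) r)
                        (Conf Spo (u,v') (Some (a,u')) (Some (v',f)) Star)"
| D3b: "tr vb tau v' \<Longrightarrow> f = Smile \<Longrightarrow>
      gmove tr tau E (Conf Dup (u,v) (Some (a,u')) (Some (vb,f)) r) (Conf Spo (u',v') None None Tick)"
| D3c: "tr vb tau v' \<Longrightarrow> f \<in> E \<Longrightarrow>
      gmove tr tau E (Conf Dup (u,v) (Some (a,u')) (Some (vb,f)) r)
                        (Conf Spo (u,v) (Some (a,u')) (Some (v',f)) Star)"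

definition dup_strategy :: "('s \<Rightarrow> 'a \<Rightarrow> 's \<Rightarrow> bool) \<Rightarrow> 'a \<Rightarrow> tag set
    \<Rightarrow> (('s, 'a) conf list \<Rightarrow> ('s, 'a) conf) \<Rightarrow> bool" where
  "dup_strategy tr tau E \<sigma> \<longleftrightarrow>
     (\<forall>h. h \<noteq> [] \<and> owner (last h) = Dup \<and> (\<exists>c'. gmove tr tau E (last h) c')
          \<longrightarrow> gmove tr tau E (last h) (\<sigma> h))"

definition finite_play :: "('s \<Rightarrow> 'a \<Rightarrow> 's \<Rightarrow> bool) \<Rightarrow> 'a \<Rightarrow> tag set
    \<Rightarrow> (('s, 'a) conf list \<Rightarrow> ('s, 'a) conf) \<Rightarrow> ('s, 'a) conf \<Rightarrow> ('s, 'a) conf list \<Rightarrow> bool" where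
  "finite_play tr tau E \<sigma> c0 xs \<longleftrightarrow>
     xs \<noteq> [] \<and> hd xs = c0 \<and>
     (\<forall>i. Suc i < length xs \<longrightarrow>
        gmove tr tau E (xs ! i) (xs ! Suc i) \<and>
        (owner (xs ! i) = Dup \<longrightarrow> xs ! Suc i = \<sigma> (take (Suc i) xs))) \<and>
     \<not> (\<exists>c'. gmove tr tau E (last xs) c')"

definition infinite_play :: "('s \<Rightarrow> 'a \<Rightarrow> 's \<Rightarrow> bool) \<Rightarrow> 'a \<Rightarrow> tag set
    \<Rightarrow> (('s, 'a) conf list \<Rightarrow> ('s, 'a) conf) \<Rightarrow> ('s, 'a) conf \<Rightarrow> (nat \<Rightarrow> ('s, 'a) conf) \<Rightarrow> bool" where
  "infinite_play tr tau E \<sigma> c0 p \<longleftrightarrow>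
     p 0 = c0 \<and>
     (\<forall>i. gmove tr tau E (p i) (p (Suc i)) \<and>
          (owner (p i) = Dup \<longrightarrow> p (Suc i) = \<sigma> (map p [0..<Suc i])))"

definition dup_wins :: "('s \<Rightarrow> 'a \<Rightarrow> 's \<Rightarrow> bool) \<Rightarrow> 'a \<Rightarrow> tag set \<Rightarrow> ('s, 'a) conf \<Rightarrow> bool" where
  "dup_wins tr tau E c0 \<longleftrightarrow>
     (\<exists>\<sigma>. dup_strategy tr tau E \<sigma> \<and>
        (\<forall>xs. finite_play tr tau E \<sigma> c0 xs \<longrightarrow> owner (last xs) = Spo) \<and>
        (\<forall>p. infinite_play tr tau E \<sigma> c0 p \<longrightarrow> infinite {i. rew (p i) = Tick}))"

definition game_equiv :: "('s \<Rightarrow> 'a \<Rightarrow> 's \<Rightarrow> bool) \<Rightarrow> 'a \<Rightarrow> tag set \<Rightarrow> 's \<Rightarrow> 's \<Rightarrow> bool" where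
  "game_equiv tr tau E s t \<longleftrightarrow> dup_wins tr tau E (Conf Spo (s,t) None None Star)"

text \<open>E(x,y): the smallest set with Frown in E(o,y) and Smile in E(x,o).\<close>
definition Eset :: "mode \<Rightarrow> mode \<Rightarrow> tag set" where
  "Eset x y = (if x = Mo then {Frown} else {}) \<union> (if y = Mo then {Smile} else {})"

end

theory Submission
  imports Defs
begin


fun s1 :: "('s,'a) conf \<Rightarrow> ('s,'a) conf" where "s1 (Conf p q c m r) = Conf Dup q c m Star"
fun chal :: "('s,'a) conf \<Rightarrow> ('a \<times> 's) option" where "chal (Conf p q c m r) = c"

inductive dchain :: "('s \<Rightarrow> 'a \<Rightarrow> 's \<Rightarrow> bool) \<Rightarrow> 'a \<Rightarrow> tag set \<Rightarrow> ('s,'a) conf \<Rightarrow> bool"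
  for tr tau E where
  dc1: "gmove tr tau E D D' \<Longrightarrow> dup_wins tr tau E D' \<Longrightarrow> chal D' = None \<Longrightarrow> dchain tr tau E D"
| dc2: "gmove tr tau E D D' \<Longrightarrow> dup_wins tr tau E D' \<Longrightarrow> chal D' \<noteq> None \<Longrightarrow> dchain tr tau E (s1 D') \<Longrightarrow> dchain tr tau E D"

lemma mapupt: "map f [0..<Suc n] = f 0 # map (\<lambda>i. f (Suc i)) [0..<n]"
  by (induct n) auto

locale GM =
  fixes tr :: "'s \<Rightarrow> 'a \<Rightarrow> 's \<Rightarrow> bool" and tau :: 'a and E :: "tag set"
begin

abbreviation mv where "mv \<equiv> gmove tr tau E"

definition ww :: "(('s,'a) conf list \<Rightarrow> ('s,'a) conf) \<Rightarrow> ('s,'a) conf \<Rightarrow> bool" where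
  "ww \<sigma> c0 \<longleftrightarrow> (\<forall>xs. finite_play tr tau E \<sigma> c0 xs \<longrightarrow> owner (last xs) = Spo) \<and>
     (\<forall>p. infinite_play tr tau E \<sigma> c0 p \<longrightarrow> infinite {i. rew (p i) = Tick})"

lemma wins_def: "dup_wins tr tau E c \<longleftrightarrow> (\<exists>\<sigma>. dup_strategy tr tau E \<sigma> \<and> ww \<sigma> c)"
  unfolding dup_wins_def ww_def by blast

lemma mv_rew: "mv (Conf p q c m r) d \<Longrightarrow> mv (Conf p q c m r') d"
  by (erule gmove.cases) (auto intro: gmove.intros)

lemma mv_owner: "mv c d \<Longrightarrow> owner d \<noteq> owner c"
  by (erule gmove.cases) auto

lemma strat_shift: "dup_strategy tr tau E \<sigma> \<Longrightarrow> dup_strategy tr tau E (\<lambda>h. \<sigma> (pre @ h))"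
  unfolding dup_strategy_def
  apply (intro allI impI)
  apply (drule_tac x="pre @ h" in spec)
  by auto

lemma R1:
  assumes w: "ww \<sigma> c0" and m: "mv c0 c1" and d: "owner c0 = Dup \<Longrightarrow> c1 = \<sigma> [c0]"
  shows "ww (\<lambda>h. \<sigma> (c0 # h)) c1"
  unfolding ww_def
proof (intro conjI allI impI)
  fix xs assume f: "finite_play tr tau E (\<lambda>h. \<sigma> (c0 # h)) c1 xs"
  have "\<forall>i. Suc i < length (c0 # xs) \<longrightarrow> mv ((c0 # xs) ! i) ((c0 # xs) ! Suc i) \<and>
          (owner ((c0 # xs) ! i) = Dup \<longrightarrow> (c0 # xs) ! Suc i = \<sigma> (take (Suc i) (c0 # xs)))"
  proof (intro allI impI)
    fix i assume i: "Suc i < length (c0 # xs)"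
    show "mv ((c0 # xs) ! i) ((c0 # xs) ! Suc i) \<and>
          (owner ((c0 # xs) ! i) = Dup \<longrightarrow> (c0 # xs) ! Suc i = \<sigma> (take (Suc i) (c0 # xs)))"
    proof (cases i)
      case 0
      then show ?thesis using f m d unfolding finite_play_def by (cases xs) auto
    next
      case (Suc j)
      then show ?thesis using f i unfolding finite_play_def by auto
    qed
  qed
  then have "finite_play tr tau E \<sigma> c0 (c0 # xs)"
    using f unfolding finite_play_def by auto
  then have "owner (last (c0 # xs)) = Spo" using w unfolding ww_def by blast
  then show "owner (last xs) = Spo" using f unfolding finite_play_def by auto
next
  fix p assume ip: "infinite_play tr tau E (\<lambda>h. \<sigma> (c0 # h)) c1 p"
  define q where "q = (\<lambda>i. case i of 0 \<Rightarrow> c0 | Suc j \<Rightarrow> p j)"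
  have "infinite_play tr tau E \<sigma> c0 q"
    unfolding infinite_play_def
  proof (intro conjI)
    show "q 0 = c0" by (simp add: q_def)
    show "\<forall>i. mv (q i) (q (Suc i)) \<and> (owner (q i) = Dup \<longrightarrow> q (Suc i) = \<sigma> (map q [0..<Suc i]))"
    proof
    fix i
    show "mv (q i) (q (Suc i)) \<and> (owner (q i) = Dup \<longrightarrow> q (Suc i) = \<sigma> (map q [0..<Suc i]))"
    proof (cases i)
      case 0
      then show ?thesis using ip m d by (auto simp: q_def infinite_play_def)
    next
      case (Suc j)
      have "map q [0..<Suc i] = c0 # map p [0..<Suc j]"
        unfolding mapupt Suc by (simp add: q_def)
      then show ?thesis using ip Suc unfolding infinite_play_def
        by (simp only:) (simp add: q_def del: upt_Suc)
    qed
    qed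
  qed
  then have inf: "infinite {i. rew (q i) = Tick}" using w unfolding ww_def by blast
  have "{i. rew (q i) = Tick} \<subseteq> insert 0 (Suc ` {i. rew (p i) = Tick})"
  proof
    fix i assume "i \<in> {i. rew (q i) = Tick}"
    then show "i \<in> insert 0 (Suc ` {i. rew (p i) = Tick})"
      by (cases i) (auto simp: q_def)
  qed
  then show "infinite {i. rew (p i) = Tick}"
    using inf finite_subset by blast
qed

lemma G3:
  assumes "dup_wins tr tau E c" "owner c = Spo" "mv c c'"
  shows "dup_wins tr tau E c'"
proof -
  obtain \<sigma> where s: "dup_strategy tr tau E \<sigma>" "ww \<sigma> c" using assms(1) wins_def by blast
  have "ww (\<lambda>h. \<sigma> ([c] @ h)) c'" using R1[OF s(2) assms(3)] assms(2) by simp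
  moreover have "dup_strategy tr tau E (\<lambda>h. \<sigma> ([c] @ h))" using strat_shift[OF s(1)] .
  ultimately show ?thesis using wins_def by blast
qed

lemma has_move:
  assumes "ww \<sigma> c" "owner c = Dup" shows "\<exists>c'. mv c c'"
proof (rule ccontr)
  assume "\<not> (\<exists>c'. mv c c')"
  then have "finite_play tr tau E \<sigma> c [c]" unfolding finite_play_def by auto
  then show False using assms unfolding ww_def by auto
qed

lemma G4:
  assumes "dup_wins tr tau E c" "owner c = Dup"
  shows "\<exists>c'. mv c c' \<and> dup_wins tr tau E c'"
proof -
  obtain \<sigma> where s: "dup_strategy tr tau E \<sigma>" "ww \<sigma> c" using assms(1) wins_def by blast
  have "mv c (\<sigma> [c])" using s(1) has_move[OF s(2) assms(2)] assms(2)
    unfolding dup_strategy_def by (metis last.simps list.distinct(1))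
  moreover have "ww (\<lambda>h. \<sigma> ([c] @ h)) (\<sigma> [c])" using R1[OF s(2) \<open>mv c (\<sigma> [c])\<close>] by simp
  moreover have "dup_strategy tr tau E (\<lambda>h. \<sigma> ([c] @ h))" using strat_shift[OF s(1)] .
  ultimately show ?thesis using wins_def by blast
qed

definition fb :: "('s,'a) conf list \<Rightarrow> ('s,'a) conf" where
  "fb h = (SOME d. mv (last h) d)"

lemma strat_app: "dup_strategy tr tau E \<sigma> \<Longrightarrow> h \<noteq> [] \<Longrightarrow> owner (last h) = Dup \<Longrightarrow> mv (last h) d
  \<Longrightarrow> mv (last h) (\<sigma> h)"
  unfolding dup_strategy_def by blast

lemma fb: "mv (last h) d \<Longrightarrow> mv (last h) (fb h)"
  unfolding fb_def by (rule someI)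

lemma G1:
  assumes o: "owner c = Spo" and a: "\<forall>c'. mv c c' \<longrightarrow> dup_wins tr tau E c'"
  shows "dup_wins tr tau E c"
proof -
  have "\<forall>c'. \<exists>\<sigma>. mv c c' \<longrightarrow> dup_strategy tr tau E \<sigma> \<and> ww \<sigma> c'" using a wins_def by blast
  then obtain S where S: "\<And>c'. mv c c' \<Longrightarrow> dup_strategy tr tau E (S c') \<and> ww (S c') c'" by metis
  define \<sigma> where "\<sigma> h = (case h of c0 # c' # rest \<Rightarrow> if c0 = c \<and> mv c c' then S c' (c' # rest) else fb h
      | _ \<Rightarrow> fb h)" for h
  have st: "dup_strategy tr tau E \<sigma>"
    unfolding dup_strategy_def
  proof (intro allI impI)
    fix h assume h: "h \<noteq> [] \<and> owner (last h) = Dup \<and> (\<exists>c'. mv (last h) c')"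
    show "mv (last h) (\<sigma> h)"
    proof (cases h)
      case Nil then show ?thesis using h by simp
    next
      case (Cons c0 r)
      show ?thesis
      proof (cases r)
        case Nil then show ?thesis using h Cons fb[of "[c0]", simplified] by (auto simp: \<sigma>_def)
      next
        case (Cons c' rest)
        show ?thesis
        proof (cases "c0 = c \<and> mv c c'")
          case True
          then have "dup_strategy tr tau E (S c')" using S by blast
          then have "mv (last (c' # rest)) (S c' (c' # rest))"
            using h \<open>h = c0 # r\<close> Cons strat_app[of "S c'" "c' # rest"] by auto
          then show ?thesis using True \<open>h = c0 # r\<close> Cons by (simp add: \<sigma>_def)
        next
          case False
          have "mv (last h) (fb h)" using h fb by blast
          moreover have "\<sigma> h = fb h" unfolding \<sigma>_def using False \<open>h = c0 # r\<close> Cons by (simp (no_asm_simp))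
          ultimately show ?thesis by simp
        qed
      qed
    qed
  qed
  have "ww \<sigma> c"
    unfolding ww_def
  proof (intro conjI allI impI)
    fix xs assume f: "finite_play tr tau E \<sigma> c xs"
    then obtain xs' where xs: "xs = c # xs'" unfolding finite_play_def by (cases xs) auto
    show "owner (last xs) = Spo"
    proof (cases xs')
      case Nil then show ?thesis using xs o by simp
    next
      case (Cons c1 ys)
      have m1: "mv c c1" using f unfolding finite_play_def xs Cons by force
      then have S1: "dup_strategy tr tau E (S c1)" "ww (S c1) c1" using S by auto
      have "finite_play tr tau E (S c1) c1 xs'"
        unfolding finite_play_def
      proof (intro conjI)
        show "\<forall>i. Suc i < length xs' \<longrightarrow> mv (xs' ! i) (xs' ! Suc i) \<and>
          (owner (xs' ! i) = Dup \<longrightarrow> xs' ! Suc i = S c1 (take (Suc i) xs'))"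
        proof (intro allI impI)
          fix i assume i: "Suc i < length xs'"
          have "Suc (Suc i) < length xs" using i xs by simp
          then have "mv (xs ! Suc i) (xs ! Suc (Suc i)) \<and>
            (owner (xs ! Suc i) = Dup \<longrightarrow> xs ! Suc (Suc i) = \<sigma> (take (Suc (Suc i)) xs))"
            using f unfolding finite_play_def by blast
          moreover have "\<sigma> (take (Suc (Suc i)) xs) = S c1 (take (Suc i) xs')"
            using m1 unfolding xs Cons by (simp add: \<sigma>_def)
          ultimately show "mv (xs' ! i) (xs' ! Suc i) \<and>
            (owner (xs' ! i) = Dup \<longrightarrow> xs' ! Suc i = S c1 (take (Suc i) xs'))"
            using xs by simp
        qed
      qed (use f xs Cons in \<open>auto simp: finite_play_def\<close>)
      then have "owner (last xs') = Spo" using S1 unfolding ww_def by blast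
      then show ?thesis using xs Cons by simp
    qed
  next
    fix p assume ip: "infinite_play tr tau E \<sigma> c p"
    define c1 where "c1 = p 1"
    have p0: "p 0 = c" using ip unfolding infinite_play_def by simp
    have m1: "mv c c1" using ip p0 unfolding infinite_play_def c1_def by (metis One_nat_def)
    then have S1: "dup_strategy tr tau E (S c1)" "ww (S c1) c1" using S by auto
    define q where "q i = p (Suc i)" for i
    have "infinite_play tr tau E (S c1) c1 q"
      unfolding infinite_play_def
    proof (rule conjI[OF _ allI])
      show "q 0 = c1" by (simp add: q_def c1_def)
      fix i
      have A: "mv (p (Suc i)) (p (Suc (Suc i))) \<and> (owner (p (Suc i)) = Dup \<longrightarrow>
          p (Suc (Suc i)) = \<sigma> (map p [0..<Suc (Suc i)]))" using ip unfolding infinite_play_def by blast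
      have "map p [0..<Suc (Suc i)] = c # c1 # map (\<lambda>k. q (Suc k)) [0..<i]"
        unfolding mapupt by (simp add: p0 c1_def q_def)
      moreover have "map q [0..<Suc i] = c1 # map (\<lambda>k. q (Suc k)) [0..<i]"
        unfolding mapupt by (simp add: c1_def q_def)
      ultimately have "\<sigma> (map p [0..<Suc (Suc i)]) = S c1 (map q [0..<Suc i])"
        using m1 by (simp add: \<sigma>_def del: upt_Suc)
      then show "mv (q i) (q (Suc i)) \<and> (owner (q i) = Dup \<longrightarrow> q (Suc i) = S c1 (map q [0..<Suc i]))"
        using A by (simp add: q_def del: upt_Suc)
    qed
    then have inf: "infinite {i. rew (q i) = Tick}" using S1 unfolding ww_def by blast
    have "Suc ` {i. rew (q i) = Tick} \<subseteq> {i. rew (p i) = Tick}" by (auto simp: q_def)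
    then show "infinite {i. rew (p i) = Tick}"
      using inf finite_subset finite_imageD inj_Suc by (metis inj_on_subset subset_UNIV)
  qed
  then show ?thesis using st wins_def by blast
qed

lemma G2:
  assumes o: "owner c = Dup" and m: "mv c c'" and a: "dup_wins tr tau E c'"
  shows "dup_wins tr tau E c"
proof -
  obtain S where S: "dup_strategy tr tau E S" "ww S c'" using a wins_def by blast
  define \<sigma> where "\<sigma> h = (case h of [c0] \<Rightarrow> if c0 = c then c' else fb h
     | c0 # c1 # rest \<Rightarrow> if c0 = c \<and> c1 = c' then S (c1 # rest) else fb h
     | _ \<Rightarrow> fb h)" for h
  have st: "dup_strategy tr tau E \<sigma>"
    unfolding dup_strategy_def
  proof (intro allI impI)
    fix h assume h: "h \<noteq> [] \<and> owner (last h) = Dup \<and> (\<exists>c'. mv (last h) c')"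
    show "mv (last h) (\<sigma> h)"
    proof (cases h)
      case Nil then show ?thesis using h by simp
    next
      case (Cons c0 r)
      show ?thesis
      proof (cases r)
        case Nil then show ?thesis using h Cons fb[of "[c0]", simplified] m by (auto simp: \<sigma>_def)
      next
        case (Cons c1 rest)
        show ?thesis
        proof (cases "c0 = c \<and> c1 = c'")
          case True
          then have "mv (last (c1 # rest)) (S (c1 # rest))"
            using S(1) h \<open>h = c0 # r\<close> Cons strat_app[of S "c1 # rest"] by auto
          then show ?thesis using True \<open>h = c0 # r\<close> Cons by (simp add: \<sigma>_def)
        next
          case False
          have "mv (last h) (fb h)" using h fb by blast
          moreover have "\<sigma> h = fb h" unfolding \<sigma>_def using False \<open>h = c0 # r\<close> Cons by (simp (no_asm_simp))
          ultimately show ?thesis by simp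
        qed
      qed
    qed
  qed
  have "ww \<sigma> c"
    unfolding ww_def
  proof (intro conjI allI impI)
    fix xs assume f: "finite_play tr tau E \<sigma> c xs"
    then obtain xs' where xs: "xs = c # xs'" unfolding finite_play_def by (cases xs) auto
    show "owner (last xs) = Spo"
    proof (cases xs')
      case Nil then show ?thesis using xs f m unfolding finite_play_def by auto
    next
      case (Cons c1 ys)
      have "c1 = \<sigma> [c]" using f o unfolding finite_play_def xs Cons by force
      then have c1: "c1 = c'" by (simp add: \<sigma>_def)
      have "finite_play tr tau E S c' xs'"
        unfolding finite_play_def
      proof (intro conjI)
        show "\<forall>i. Suc i < length xs' \<longrightarrow> mv (xs' ! i) (xs' ! Suc i) \<and>
          (owner (xs' ! i) = Dup \<longrightarrow> xs' ! Suc i = S (take (Suc i) xs'))"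
        proof (intro allI impI)
          fix i assume i: "Suc i < length xs'"
          have "Suc (Suc i) < length xs" using i xs by simp
          then have "mv (xs ! Suc i) (xs ! Suc (Suc i)) \<and>
            (owner (xs ! Suc i) = Dup \<longrightarrow> xs ! Suc (Suc i) = \<sigma> (take (Suc (Suc i)) xs))"
            using f unfolding finite_play_def by blast
          moreover have "\<sigma> (take (Suc (Suc i)) xs) = S (take (Suc i) xs')"
            unfolding xs Cons c1 by (simp add: \<sigma>_def)
          ultimately show "mv (xs' ! i) (xs' ! Suc i) \<and>
            (owner (xs' ! i) = Dup \<longrightarrow> xs' ! Suc i = S (take (Suc i) xs'))"
            using xs by simp
        qed
      qed (use f xs Cons c1 in \<open>auto simp: finite_play_def\<close>)
      then have "owner (last xs') = Spo" using S unfolding ww_def by blast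
      then show ?thesis using xs Cons by simp
    qed
  next
    fix p assume ip: "infinite_play tr tau E \<sigma> c p"
    have p0: "p 0 = c" using ip unfolding infinite_play_def by simp
    have "p (Suc 0) = \<sigma> (map p [0..<Suc 0])" using ip p0 o unfolding infinite_play_def by metis
    then have "p 1 = \<sigma> [c]" using p0 by simp
    then have c1: "p 1 = c'" by (simp add: \<sigma>_def)
    define q where "q i = p (Suc i)" for i
    have "infinite_play tr tau E S c' q"
      unfolding infinite_play_def
    proof (rule conjI[OF _ allI])
      show "q 0 = c'" using c1 by (simp add: q_def)
      fix i
      have A: "mv (p (Suc i)) (p (Suc (Suc i))) \<and> (owner (p (Suc i)) = Dup \<longrightarrow>
          p (Suc (Suc i)) = \<sigma> (map p [0..<Suc (Suc i)]))" using ip unfolding infinite_play_def by blast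
      have "map p [0..<Suc (Suc i)] = c # c' # map (\<lambda>k. q (Suc k)) [0..<i]"
        unfolding mapupt using p0 c1 by (simp add: q_def)
      moreover have "map q [0..<Suc i] = c' # map (\<lambda>k. q (Suc k)) [0..<i]"
        unfolding mapupt using c1 by (simp add: q_def)
      ultimately have "\<sigma> (map p [0..<Suc (Suc i)]) = S (map q [0..<Suc i])"
        by (simp add: \<sigma>_def del: upt_Suc)
      then show "mv (q i) (q (Suc i)) \<and> (owner (q i) = Dup \<longrightarrow> q (Suc i) = S (map q [0..<Suc i]))"
        using A by (simp add: q_def del: upt_Suc)
    qed
    then have inf: "infinite {i. rew (q i) = Tick}" using S unfolding ww_def by blast
    have "Suc ` {i. rew (q i) = Tick} \<subseteq> {i. rew (p i) = Tick}" by (auto simp: q_def)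
    then show "infinite {i. rew (p i) = Tick}"
      using inf finite_subset finite_imageD inj_Suc by (metis inj_on_subset subset_UNIV)
  qed
  then show ?thesis using st wins_def by blast
qed

lemma RI:
  assumes "dup_wins tr tau E (Conf p q c m r)"
  shows "dup_wins tr tau E (Conf p q c m r')"
proof (cases p)
  case Spo
  show ?thesis
  proof (rule G1)
    show "owner (Conf p q c m r') = Spo" using Spo by simp
    show "\<forall>c'. mv (Conf p q c m r') c' \<longrightarrow> dup_wins tr tau E c'"
      using G3[OF assms] Spo mv_rew by fastforce
  qed
next
  case Dup
  then obtain c' where "mv (Conf p q c m r) c'" "dup_wins tr tau E c'" using G4[OF assms] by auto
  then show ?thesis using G2[of "Conf p q c m r'" c'] Dup mv_rew by auto
qed

lemma inv_wins:
  fixes Inv :: "('s,'a) conf set" and \<mu> :: "('s,'a) conf \<Rightarrow> nat"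
  assumes spo: "\<And>c c'. c \<in> Inv \<Longrightarrow> owner c = Spo \<Longrightarrow> mv c c' \<Longrightarrow>
        c' \<in> Inv \<and> (rew c = Star \<and> rew c' = Star \<longrightarrow> \<mu> c' < \<mu> c)"
    and dup: "\<And>c. c \<in> Inv \<Longrightarrow> owner c = Dup \<Longrightarrow>
        \<exists>c'. mv c c' \<and> c' \<in> Inv \<and> (rew c = Star \<and> rew c' = Star \<longrightarrow> \<mu> c' < \<mu> c)"
    and c0: "c0 \<in> Inv"
  shows "dup_wins tr tau E c0"
proof -
  define good where "good c c' \<longleftrightarrow> mv c c' \<and> c' \<in> Inv \<and> (rew c = Star \<and> rew c' = Star \<longrightarrow> \<mu> c' < \<mu> c)"
    for c c'
  define ch where "ch c = (SOME c'. good c c')" for c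
  have ch: "good c (ch c)" if "c \<in> Inv" "owner c = Dup" for c
    using dup[OF that] unfolding ch_def good_def[symmetric] by (rule someI_ex)
  define \<sigma> where "\<sigma> h = (if last h \<in> Inv \<and> owner (last h) = Dup then ch (last h) else fb h)" for h
  have st: "dup_strategy tr tau E \<sigma>"
    unfolding dup_strategy_def
  proof (intro allI impI)
    fix h assume h: "h \<noteq> [] \<and> owner (last h) = Dup \<and> (\<exists>c'. mv (last h) c')"
    show "mv (last h) (\<sigma> h)"
    proof (cases "last h \<in> Inv")
      case True then show ?thesis using ch[of "last h"] h unfolding \<sigma>_def good_def by auto
    next
      case False
      have "mv (last h) (fb h)" using h fb by blast
      then show ?thesis using False unfolding \<sigma>_def by simp
    qed
  qed
  have "ww \<sigma> c0"
    unfolding ww_def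
  proof (intro conjI allI impI)
    fix xs assume f: "finite_play tr tau E \<sigma> c0 xs"
    have inv: "i < length xs \<Longrightarrow> xs ! i \<in> Inv" for i
    proof (induction i)
      case 0 then show ?case using f c0 unfolding finite_play_def by (cases xs) auto
    next
      case (Suc i)
      then have i: "xs ! i \<in> Inv" and m: "mv (xs ! i) (xs ! Suc i)"
          and d: "owner (xs ! i) = Dup \<longrightarrow> xs ! Suc i = \<sigma> (take (Suc i) xs)"
        using f unfolding finite_play_def by auto
      show ?case
      proof (cases "owner (xs ! i)")
        case Spo then show ?thesis using spo[OF i Spo m] by simp
      next
        case Dup
        have "last (take (Suc i) xs) = xs ! i" using Suc.prems by (subst last_conv_nth) auto
        then have "xs ! Suc i = ch (xs ! i)" using d Dup i unfolding \<sigma>_def by simp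
        then show ?thesis using ch[OF i Dup] unfolding good_def by simp
      qed
    qed
    have ne: "xs \<noteq> []" and nm: "\<not> (\<exists>c'. mv (last xs) c')" using f unfolding finite_play_def by auto
    have "last xs \<in> Inv" using inv[of "length xs - 1"] ne by (simp add: last_conv_nth)
    then show "owner (last xs) = Spo"
      using dup[of "last xs"] nm by (cases "owner (last xs)") auto
  next
    fix p assume ip: "infinite_play tr tau E \<sigma> c0 p"
    have stepg: "p i \<in> Inv \<Longrightarrow> mv (p i) (p (Suc i)) \<and> p (Suc i) \<in> Inv \<and>
        (rew (p i) = Star \<and> rew (p (Suc i)) = Star \<longrightarrow> \<mu> (p (Suc i)) < \<mu> (p i))" for i
    proof (cases "owner (p i)")
      case Spo
      assume i: "p i \<in> Inv"
      have "mv (p i) (p (Suc i))" using ip unfolding infinite_play_def by blast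
      then show ?thesis using spo[OF i Spo] by blast
    next
      case Dup
      assume i: "p i \<in> Inv"
      have "p (Suc i) = \<sigma> (map p [0..<Suc i])" using ip Dup unfolding infinite_play_def by blast
      also have "\<dots> = ch (p i)" using i Dup unfolding \<sigma>_def by simp
      finally show ?thesis using ch[OF i Dup] unfolding good_def by simp
    qed
    have inv: "p i \<in> Inv" for i
    proof (induction i)
      case 0 then show ?case using ip c0 unfolding infinite_play_def by simp
    next
      case (Suc i) then show ?case using stepg by blast
    qed
    show "infinite {i. rew (p i) = Tick}"
    proof
      assume fin: "finite {i. rew (p i) = Tick}"
      then obtain N where N: "\<forall>i\<in>{i. rew (p i) = Tick}. i < N" using finite_nat_set_iff_bounded by blast
      have star: "i \<ge> N \<Longrightarrow> rew (p i) = Star" for i using N by (cases "rew (p i)") auto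
      have "\<mu> (p (N + k)) + k \<le> \<mu> (p N)" for k
      proof (induction k)
        case 0 then show ?case by simp
      next
        case (Suc k)
        have "\<mu> (p (Suc (N + k))) < \<mu> (p (N + k))"
          using stepg[OF inv[of "N + k"]] star[of "N + k"] star[of "Suc (N + k)"] by simp
        then show ?case using Suc by simp
      qed
      from this[of "Suc (\<mu> (p N))"] show False by simp
    qed
  qed
  then show ?thesis using st wins_def by blast
qed

lemma s1_mv: assumes "owner c = Spo" "chal c \<noteq> None" shows "mv c (s1 c)"
proof (cases c)
  case (Conf p q cc m r)
  obtain a b where "q = (a,b)" by (cases q)
  then show ?thesis using assms Conf by (simp add: gmove.S1)
qed

lemma dup_nonexit_star: "owner c = Dup \<Longrightarrow> mv c d \<Longrightarrow> chal d \<noteq> None \<Longrightarrow> rew d = Star"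
  by (erule gmove.cases) auto

lemma SL:
  assumes w: "dup_wins tr tau E D" and o: "owner D = Dup" and c: "chal D \<noteq> None"
  shows "dchain tr tau E D"
proof (rule ccontr)
  assume nd: "\<not> dchain tr tau E D"
  obtain \<sigma> where st: "dup_strategy tr tau E \<sigma>" and ws: "ww \<sigma> D" using w wins_def by blast
  define nxt where "nxt h = (if owner (last h) = Dup then \<sigma> h else s1 (last h))" for h
  define hist where "hist = rec_nat [D] (\<lambda>n h. h @ [nxt h])"
  have h0: "hist 0 = [D]" and hS: "hist (Suc n) = hist n @ [nxt (hist n)]" for n
    by (simp_all add: hist_def)
  define p where "p i = last (hist i)" for i
  have lp: "last (hist i) = p i" for i by (simp add: p_def)
  have pS: "p (Suc n) = nxt (hist n)" for n by (simp add: p_def hS)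
  have hmap: "hist n = map p [0..<Suc n]" for n
  proof (induction n)
    case 0 then show ?case by (simp add: h0 p_def)
  next
    case (Suc n)
    have "hist (Suc n) = map p [0..<Suc n] @ [p (Suc n)]" using Suc pS by (simp only: hS)
    then show ?case by simp
  qed
  have hne: "hist n \<noteq> []" for n by (cases n) (simp_all add: h0 hS)
  have bl: "butlast (hist (Suc n)) = hist n" for n by (simp add: hS)
  have hn: "butlast (hist n) @ [p n] = hist n" for n
    using append_butlast_last_id[OF hne[of n]] by (simp add: lp)
  have eqf: "(\<lambda>h. \<sigma> (butlast (hist n) @ p n # h)) = (\<lambda>h. \<sigma> (butlast (hist (Suc n)) @ h))" for n
  proof
    fix h
    have "butlast (hist n) @ p n # h = (butlast (hist n) @ [p n]) @ h" by simp
    also have "\<dots> = hist n @ h" by (simp only: hn)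
    finally show "\<sigma> (butlast (hist n) @ p n # h) = \<sigma> (butlast (hist (Suc n)) @ h)" by (simp only: bl)
  qed
  define I where "I n \<longleftrightarrow> ww (\<lambda>h. \<sigma> (butlast (hist n) @ h)) (p n) \<and> chal (p n) \<noteq> None \<and>
      (owner (p n) = Dup \<longrightarrow> \<not> dchain tr tau E (p n)) \<and> (owner (p n) = Spo \<longrightarrow> \<not> dchain tr tau E (s1 (p n))) \<and>
      (0 < n \<longrightarrow> rew (p n) = Star)" for n
  have step: "mv (p n) (p (Suc n)) \<and> I (Suc n)" if In: "I n" for n
  proof -
    let ?\<sigma> = "\<lambda>h. \<sigma> (butlast (hist n) @ h)"
    have wn: "ww ?\<sigma> (p n)" using In I_def by blast
    show ?thesis
    proof (cases "owner (p n)")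
      case Dup
      have pSn: "p (Suc n) = \<sigma> (hist n)" using Dup pS[of n] by (simp add: nxt_def lp)
      obtain d where "mv (p n) d" using has_move[OF wn Dup] by blast
      then have mvn: "mv (p n) (p (Suc n))" using strat_app[OF st hne[of n], of d] Dup pSn
        by (simp add: lp)
      have "?\<sigma> [p n] = p (Suc n)" using pSn hn[of n] by simp
      then have w1: "ww (\<lambda>h. ?\<sigma> (p n # h)) (p (Suc n))" using R1[OF wn mvn] by simp
      then have w2: "ww (\<lambda>h. \<sigma> (butlast (hist (Suc n)) @ h)) (p (Suc n))" using eqf[of n] by simp
      have dw: "dup_wins tr tau E (p (Suc n))" using w2 strat_shift[OF st] wins_def by blast
      have os: "owner (p (Suc n)) = Spo" using mv_owner[OF mvn] Dup by (cases "owner (p (Suc n))") auto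
      have nd: "\<not> dchain tr tau E (p n)" using In Dup I_def by blast
      have cn: "chal (p (Suc n)) \<noteq> None" using dc1[OF mvn dw] nd by blast
      have "\<not> dchain tr tau E (s1 (p (Suc n)))" using dc2[OF mvn dw cn] nd by blast
      moreover have "rew (p (Suc n)) = Star" using dup_nonexit_star[OF Dup mvn cn] .
      ultimately show ?thesis using mvn w2 os cn unfolding I_def by simp
    next
      case Spo
      have pSn: "p (Suc n) = s1 (p n)" using Spo pS[of n] by (simp add: nxt_def lp)
      have cn: "chal (p n) \<noteq> None" using In I_def by blast
      have mvn: "mv (p n) (p (Suc n))" using s1_mv[OF Spo cn] pSn by simp
      have w1: "ww (\<lambda>h. ?\<sigma> (p n # h)) (p (Suc n))" using R1[OF wn mvn] Spo by simp
      then have w2: "ww (\<lambda>h. \<sigma> (butlast (hist (Suc n)) @ h)) (p (Suc n))" using eqf[of n] by simp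
      have "\<not> dchain tr tau E (s1 (p n))" using In Spo I_def by blast
      moreover have "chal (s1 (p n)) = chal (p n)" "owner (s1 (p n)) = Dup" "rew (s1 (p n)) = Star"
        by (cases "p n", simp)+
      ultimately show ?thesis using mvn w2 pSn cn unfolding I_def by simp
    qed
  qed
  have I0: "I 0" unfolding I_def using ws nd c o by (simp add: h0 p_def)
  have Iall: "I n" for n
  proof (induction n)
    case 0 show ?case by (rule I0)
  next
    case (Suc n) then show ?case using step by blast
  qed
  have "infinite_play tr tau E \<sigma> D p"
    unfolding infinite_play_def
  proof (rule conjI[OF _ allI])
    show "p 0 = D" by (simp add: p_def h0)
    fix i
    have "owner (p i) = Dup \<longrightarrow> p (Suc i) = \<sigma> (hist i)"
      using pS[of i] by (simp add: nxt_def lp)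
    then have "owner (p i) = Dup \<longrightarrow> p (Suc i) = \<sigma> (map p [0..<Suc i])"
      by (simp only: hmap)
    then show "mv (p i) (p (Suc i)) \<and> (owner (p i) = Dup \<longrightarrow> p (Suc i) = \<sigma> (map p [0..<Suc i]))"
      using step[OF Iall[of i]] by blast
  qed
  then have inf: "infinite {i. rew (p i) = Tick}" using ws ww_def by blast
  have "{i. rew (p i) = Tick} \<subseteq> {0}"
  proof
    fix i assume i: "i \<in> {i. rew (p i) = Tick}"
    show "i \<in> {0}"
    proof (rule ccontr)
      assume "i \<notin> {0}"
      then have "rew (p i) = Star" using Iall[of i] unfolding I_def by simp
      then show False using i by simp
    qed
  qed
  then show False using inf finite_subset by blast
qed

end


definition semi :: "('s \<Rightarrow> 'a \<Rightarrow> 's \<Rightarrow> bool) \<Rightarrow> 'a \<Rightarrow> mode \<Rightarrow> mode \<Rightarrow> ('s \<Rightarrow> 's \<Rightarrow> bool) \<Rightarrow> bool" where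
  "semi tr tau x y R \<longleftrightarrow> symp R \<and>
     (\<forall>s t a s'. R s t \<and> tr s a s' \<longrightarrow>
        (a = tau \<and> (\<exists>t'. tau_steps tr tau t t' \<and> R s t' \<and> R s' t')) \<or>
        (\<exists>t' t1 t2. gstep tr tau x R s t t1 \<and> tr t1 a t2 \<and> gstep tr tau y R s' t2 t' \<and> R s' t'))"

definition QQ :: "('s \<Rightarrow> 'a \<Rightarrow> 's \<Rightarrow> bool) \<Rightarrow> 'a \<Rightarrow> mode \<Rightarrow> mode \<Rightarrow> 's \<Rightarrow> 's \<Rightarrow> bool" where
  "QQ tr tau x y s t \<longleftrightarrow> (\<exists>R. semi tr tau x y R \<and> R s t)"

inductive pathP :: "('s \<Rightarrow> 'a \<Rightarrow> 's \<Rightarrow> bool) \<Rightarrow> 'a \<Rightarrow> ('s \<Rightarrow> bool) \<Rightarrow> 's \<Rightarrow> 's \<Rightarrow> bool"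
  for tr tau P where
  pr: "P u \<Longrightarrow> pathP tr tau P u u"
| ps: "P u \<Longrightarrow> tr u tau w \<Longrightarrow> pathP tr tau P w v \<Longrightarrow> pathP tr tau P u v"

lemma pathP_hd: "pathP tr tau P u v \<Longrightarrow> P u"
  by (erule pathP.cases) auto

lemma tau_step: "tr u tau w \<Longrightarrow> tau_steps tr tau w v \<Longrightarrow> tau_steps tr tau u v"
  unfolding tau_steps_def by (rule converse_rtranclp_into_rtranclp)

lemma tau_snoc: "tau_steps tr tau u w \<Longrightarrow> tr w tau v \<Longrightarrow> tau_steps tr tau u v"
  unfolding tau_steps_def by (rule rtranclp.rtrancl_into_rtrancl)

lemma tau_trans: "tau_steps tr tau u w \<Longrightarrow> tau_steps tr tau w v \<Longrightarrow> tau_steps tr tau u v"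
  unfolding tau_steps_def by (rule rtranclp_trans)

lemma tau_refl: "tau_steps tr tau u u"
  unfolding tau_steps_def by simp

lemma path_of:
  assumes "tau_steps tr tau t t'" "\<And>u. tau_steps tr tau t u \<Longrightarrow> tau_steps tr tau u t' \<Longrightarrow> P u"
  shows "pathP tr tau P t t'"
  using assms(1)[unfolded tau_steps_def] assms(2)
proof (induction t rule: converse_rtranclp_induct)
  case base
  have "P t'" using base[OF tau_refl tau_refl] .
  then show ?case by (rule pathP.pr)
next
  case (step t w)
  have w: "tau_steps tr tau w t'" using step.hyps(2) unfolding tau_steps_def .
  have Pt: "P t" using step.prems[OF tau_refl tau_step[of tr t tau w, OF step.hyps(1) w]] .
  have pw: "pathP tr tau P w t'"
    using step.IH step.prems[OF tau_step[of tr t tau w, OF step.hyps(1)]] by blast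
  show ?case by (rule pathP.ps[OF Pt step.hyps(1) pw])
qed

lemma gstep_mono:
  assumes "gstep tr tau x R s t t1" "\<And>a b. R a b \<Longrightarrow> R' a b"
  shows "gstep tr tau x R' s t t1"
  using assms unfolding gstep_def by (cases x) auto

lemma gstep_tau: "gstep tr tau x R s t t1 \<Longrightarrow> tau_steps tr tau t t1"
  unfolding gstep_def by (cases x) auto

lemma bisim_semi:
  assumes b: "generic_bisim tr tau x y R"
  shows "semi tr tau x y R"
  unfolding semi_def
proof (intro conjI allI impI)
  show "symp R" using b by (simp add: generic_bisim_def)
  fix s t a s' assume st: "R s t \<and> tr s a s'"
  have cl: "\<forall>s t a s'. R s t \<and> tr s a s' \<longrightarrow> (a = tau \<and> R s' t) \<or>
        (\<exists>t' t1 t2. gstep tr tau x R s t t1 \<and> tr t1 a t2 \<and> gstep tr tau y R s' t2 t' \<and> R s' t')"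
    using b by (simp add: generic_bisim_def)
  have "(a = tau \<and> R s' t) \<or> (\<exists>t' t1 t2. gstep tr tau x R s t t1 \<and> tr t1 a t2 \<and>
                  gstep tr tau y R s' t2 t' \<and> R s' t')" using cl st by blast
  then show "(a = tau \<and> (\<exists>t'. tau_steps tr tau t t' \<and> R s t' \<and> R s' t')) \<or>
      (\<exists>t' t1 t2. gstep tr tau x R s t t1 \<and> tr t1 a t2 \<and> gstep tr tau y R s' t2 t' \<and> R s' t')"
  proof
    assume "a = tau \<and> R s' t"
    then have "a = tau" "tau_steps tr tau t t \<and> R s t \<and> R s' t" using st tau_refl by auto
    then show ?thesis by blast
  qed simp
qed

lemma semi_QQ: "semi tr tau x y R \<Longrightarrow> R s t \<Longrightarrow> QQ tr tau x y s t"
  unfolding QQ_def by blast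

lemma QQ_sym: "QQ tr tau x y s t \<Longrightarrow> QQ tr tau x y t s"
proof -
  assume "QQ tr tau x y s t"
  then obtain R where R: "semi tr tau x y R" "R s t" unfolding QQ_def by blast
  have "symp R" using R(1) by (simp add: semi_def)
  then have "R t s" using R(2) by (rule sympD)
  then show ?thesis using R(1) semi_QQ by metis
qed

lemma semi_clause:
  assumes "semi tr tau x y R" "R s t" "tr s a s'"
  shows "(a = tau \<and> (\<exists>t'. tau_steps tr tau t t' \<and> R s t' \<and> R s' t')) \<or>
        (\<exists>t' t1 t2. gstep tr tau x R s t t1 \<and> tr t1 a t2 \<and> gstep tr tau y R s' t2 t' \<and> R s' t')"
proof -
  have cl: "\<forall>s t a s'. R s t \<and> tr s a s' \<longrightarrow>
        (a = tau \<and> (\<exists>t'. tau_steps tr tau t t' \<and> R s t' \<and> R s' t')) \<or>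
        (\<exists>t' t1 t2. gstep tr tau x R s t t1 \<and> tr t1 a t2 \<and> gstep tr tau y R s' t2 t' \<and> R s' t')"
    using assms(1) by (simp add: semi_def)
  show ?thesis using cl assms(2,3) by blast
qed

lemma QQ_clause:
  assumes "QQ tr tau x y s t" "tr s a s'"
  shows "(a = tau \<and> (\<exists>t'. tau_steps tr tau t t' \<and> QQ tr tau x y s t' \<and> QQ tr tau x y s' t')) \<or>
        (\<exists>t' t1 t2. gstep tr tau x (QQ tr tau x y) s t t1 \<and> tr t1 a t2 \<and>
           gstep tr tau y (QQ tr tau x y) s' t2 t' \<and> QQ tr tau x y s' t')"
proof -
  obtain R where R: "semi tr tau x y R" "R s t" using assms(1) unfolding QQ_def by blast
  have sub: "\<And>a b. R a b \<Longrightarrow> QQ tr tau x y a b" using R(1) semi_QQ by metis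
  from semi_clause[OF R assms(2)] show ?thesis
  proof (elim disjE conjE exE)
    fix t' assume a: "a = tau" "tau_steps tr tau t t'" "R s t'" "R s' t'"
    have "QQ tr tau x y s t'" "QQ tr tau x y s' t'" using sub a by auto
    then show ?thesis using a(1,2) by blast
  next
    fix t' t1 t2 assume a: "gstep tr tau x R s t t1" "tr t1 a t2" "gstep tr tau y R s' t2 t'" "R s' t'"
    have "gstep tr tau x (QQ tr tau x y) s t t1" using gstep_mono[OF a(1) sub] .
    moreover have "gstep tr tau y (QQ tr tau x y) s' t2 t'" using gstep_mono[OF a(3) sub] .
    moreover have "QQ tr tau x y s' t'" using sub[OF a(4)] .
    ultimately show ?thesis using a(2) by blast
  qed
qed

lemma transfer:
  assumes "tau_steps tr tau r u" "QQ tr tau x y r v"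
  shows "\<exists>v'. tau_steps tr tau v v' \<and> QQ tr tau x y u v'"
  using assms(1)[unfolded tau_steps_def]
proof (induction u rule: rtranclp_induct)
  case base then show ?case using assms(2) tau_refl[of tr tau v] by blast
next
  case (step u u2)
  then obtain v' where v': "tau_steps tr tau v v'" "QQ tr tau x y u v'" by blast
  from QQ_clause[OF v'(2) step.hyps(2)] show ?case
  proof (elim disjE conjE exE)
    fix t' assume "tau_steps tr tau v' t'" "QQ tr tau x y u t'" "QQ tr tau x y u2 t'"
    then show ?thesis using tau_trans[OF v'(1)] by blast
  next
    fix t' t1 t2 assume a: "gstep tr tau x (QQ tr tau x y) u v' t1" "tr t1 tau t2"
        "gstep tr tau y (QQ tr tau x y) u2 t2 t'" "QQ tr tau x y u2 t'"
    have vt1: "tau_steps tr tau v t1" using tau_trans[OF v'(1) gstep_tau[OF a(1)]] .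
    have "tau_steps tr tau v t'" using tau_trans[OF tau_snoc[OF vt1 a(2)] gstep_tau[OF a(3)]] .
    then show ?thesis using a(4) by blast
  qed
qed

lemma gstep_Mb: "gstep tr tau Mb R a b c \<longleftrightarrow> tau_steps tr tau b c \<and> R a b \<and> R a c"
  by (simp add: gstep_def)

lemma gstep_Mo: "gstep tr tau Mo R a b c \<longleftrightarrow> tau_steps tr tau b c"
  by (simp add: gstep_def)

lemma gstep_pre:
  assumes "gstep tr tau z R a b c" "tau_steps tr tau q b" "R' a q" "\<And>u v. R u v \<Longrightarrow> R' u v"
  shows "gstep tr tau z R' a q c"
proof (cases z)
  case Mo
  then have "tau_steps tr tau b c" using assms(1) by (simp add: gstep_Mo)
  then have "tau_steps tr tau q c" using tau_trans[OF assms(2)] by simp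
  then show ?thesis using Mo by (simp add: gstep_Mo)
next
  case Mb
  then have bc: "tau_steps tr tau b c" and "R a c" using assms(1) by (auto simp: gstep_Mb)
  then have "R' a c" using assms(4) by simp
  moreover have "tau_steps tr tau q c" using tau_trans[OF assms(2) bc] .
  moreover have "R' a q" using assms(3) by simp
  ultimately show ?thesis using Mb by (simp add: gstep_Mb)
qed

lemma stutter:
  assumes "QQ tr tau x y r v" "QQ tr tau x y r2 v" "tau_steps tr tau r u" "tau_steps tr tau u r2"
  shows "QQ tr tau x y u v"
proof -
  let ?Q = "QQ tr tau x y"
  define N where "N a b \<longleftrightarrow> (\<exists>r r2. ?Q r b \<and> ?Q r2 b \<and> tau_steps tr tau r a \<and> tau_steps tr tau a r2)"
    for a b
  define B where "B a b \<longleftrightarrow> ?Q a b \<or> N a b \<or> N b a" for a b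
  have QB: "?Q a b \<Longrightarrow> B a b" for a b by (simp add: B_def)
  have "semi tr tau x y B"
    unfolding semi_def
  proof (intro conjI allI impI)
    show "symp B" unfolding B_def symp_def using QQ_sym[of tr tau x y] by blast
    fix p q a p' assume pq: "B p q \<and> tr p a p'"
    have tr: "tr p a p'" using pq by blast
    have Bpq: "B p q" using pq by blast
    show "(a = tau \<and> (\<exists>t'. tau_steps tr tau q t' \<and> B p t' \<and> B p' t')) \<or>
        (\<exists>t' t1 t2. gstep tr tau x B p q t1 \<and> tr t1 a t2 \<and> gstep tr tau y B p' t2 t' \<and> B p' t')"
    proof -
      have main: "?thesis" if qv: "tau_steps tr tau q v'" and Qpv: "?Q p v'" for v'
      proof -
        from QQ_clause[OF Qpv tr] show ?thesis
        proof (elim disjE conjE exE)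
          fix t' assume a: "a = tau" "tau_steps tr tau v' t'" "?Q p t'" "?Q p' t'"
          have "tau_steps tr tau q t'" using tau_trans[OF qv a(2)] .
          then show ?thesis using a(1) QB[OF a(3)] QB[OF a(4)] by blast
        next
          fix t' t1 t2 assume g: "gstep tr tau x ?Q p v' t1" "tr t1 a t2" "gstep tr tau y ?Q p' t2 t'" "?Q p' t'"
          have "gstep tr tau x B p q t1" using gstep_pre[where R'=B, OF g(1) qv Bpq] QB by blast
          moreover have "gstep tr tau y B p' t2 t'" using gstep_mono[OF g(3)] QB by blast
          ultimately show ?thesis using g(2) QB[OF g(4)] by blast
        qed
      qed
      consider "?Q p q" | "N p q" | "N q p" using Bpq B_def by blast
      then show ?thesis
      proof cases
        case 1 then show ?thesis using main[OF tau_refl] by blast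
      next
        case 2
        then obtain r r2 where rr: "?Q r q" "tau_steps tr tau r p"
          unfolding N_def by blast
        obtain v' where v': "tau_steps tr tau q v'" "?Q p v'" using transfer[OF rr(2) rr(1)] by blast
        show ?thesis using main[OF v'] .
      next
        case 3
        then obtain r r2 where rr: "?Q r2 p" "tau_steps tr tau q r2"
          unfolding N_def by blast
        show ?thesis using main[OF rr(2) QQ_sym[OF rr(1)]] .
      qed
    qed
  qed
  moreover have "B u v" unfolding B_def N_def using assms by blast
  ultimately show ?thesis using semi_QQ[of tr tau x y B u v] by simp
qed

lemma path_QQ:
  assumes "QQ tr tau x y s t" "QQ tr tau x y s t'" "tau_steps tr tau t t'"
  shows "pathP tr tau (\<lambda>u. z = Mb \<longrightarrow> QQ tr tau x y s u) t t'"
proof (rule path_of[OF assms(3)])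
  fix u assume a: "tau_steps tr tau t u" "tau_steps tr tau u t'"
  have us: "QQ tr tau x y u s" using stutter[OF QQ_sym[OF assms(1)] QQ_sym[OF assms(2)] a] .
  show "z = Mb \<longrightarrow> QQ tr tau x y s u" using QQ_sym[OF us] by simp
qed

lemma gstep_path:
  assumes "gstep tr tau z (QQ tr tau x y) s t t1"
  shows "pathP tr tau (\<lambda>u. z = Mb \<longrightarrow> QQ tr tau x y s u) t t1"
proof (cases z)
  case Mo
  then have "tau_steps tr tau t t1" using assms by (simp add: gstep_Mo)
  then show ?thesis using Mo path_of[of tr tau t t1 "\<lambda>u. z = Mb \<longrightarrow> QQ tr tau x y s u"] by simp
next
  case Mb
  then have "QQ tr tau x y s t" "QQ tr tau x y s t1" "tau_steps tr tau t t1"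
    using assms by (auto simp: gstep_Mb)
  then show ?thesis by (rule path_QQ)
qed

lemma SP:
  assumes "QQ tr tau x y s t" "tr s a s'"
  shows "(a = tau \<and> (\<exists>t'. pathP tr tau (\<lambda>u. x = Mb \<longrightarrow> QQ tr tau x y s u) t t' \<and> QQ tr tau x y s' t')) \<or>
    (\<exists>t1 t2 t'. pathP tr tau (\<lambda>u. x = Mb \<longrightarrow> QQ tr tau x y s u) t t1 \<and> tr t1 a t2 \<and>
        pathP tr tau (\<lambda>u. y = Mb \<longrightarrow> QQ tr tau x y s' u) t2 t' \<and> QQ tr tau x y s' t')"
  using QQ_clause[OF assms]
proof (elim disjE conjE exE)
  fix t' assume a: "a = tau" "tau_steps tr tau t t'" "QQ tr tau x y s t'" "QQ tr tau x y s' t'"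
  have "pathP tr tau (\<lambda>u. x = Mb \<longrightarrow> QQ tr tau x y s u) t t'" using path_QQ[OF assms(1) a(3,2)] .
  then show ?thesis using a(1,4) by blast
next
  fix t' t1 t2 assume a: "gstep tr tau x (QQ tr tau x y) s t t1" "tr t1 a t2"
    "gstep tr tau y (QQ tr tau x y) s' t2 t'" "QQ tr tau x y s' t'"
  have "pathP tr tau (\<lambda>u. x = Mb \<longrightarrow> QQ tr tau x y s u) t t1" using gstep_path[OF a(1)] .
  moreover have "pathP tr tau (\<lambda>u. y = Mb \<longrightarrow> QQ tr tau x y s' u) t2 t'" using gstep_path[OF a(3)] .
  ultimately show ?thesis using a(2,4) by blast
qed



lemma tau1: "tr u tau w \<Longrightarrow> tau_steps tr tau u w"
  unfolding tau_steps_def by (rule r_into_rtranclp)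

fun setr :: "('s,'a) conf \<Rightarrow> reward \<Rightarrow> ('s,'a) conf" where
  "setr (Conf p q c m _) r = Conf p q c m r"

lemma Frown_E: "Frown \<in> Eset x y \<longleftrightarrow> x = Mo" by (cases x; cases y) (simp_all add: Eset_def)
lemma Smile_E: "Smile \<in> Eset x y \<longleftrightarrow> y = Mo" by (cases x; cases y) (simp_all add: Eset_def)

inductive fin :: "('s \<Rightarrow> 'a \<Rightarrow> 's \<Rightarrow> bool) \<Rightarrow> 'a \<Rightarrow> mode \<Rightarrow> mode \<Rightarrow> ('s,'a) conf \<Rightarrow> nat \<Rightarrow> bool"
  for tr tau x y where
  f0: "gmove tr tau (Eset x y) D (Conf Spo (p1,p2) None None Tick) \<Longrightarrow> owner D = Dup \<Longrightarrow>
       QQ tr tau x y p1 p2 \<Longrightarrow> fin tr tau x y D 0"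
| fS: "gmove tr tau (Eset x y) D (Conf Spo (p1,p2) (Some ch) m r) \<Longrightarrow> owner D = Dup \<Longrightarrow>
       QQ tr tau x y p1 p2 \<Longrightarrow> fin tr tau x y (Conf Dup (p1,p2) (Some ch) m Star) n \<Longrightarrow> fin tr tau x y D (Suc n)"

definition Wd :: "('s \<Rightarrow> 'a \<Rightarrow> 's \<Rightarrow> bool) \<Rightarrow> 'a \<Rightarrow> tag set \<Rightarrow> 's \<Rightarrow> 's \<Rightarrow> bool" where
  "Wd tr tau E s t \<longleftrightarrow> dup_wins tr tau E (Conf Spo (s,t) None None Star)"

context GM
begin

lemma mv_spo_cases:
  assumes "mv (Conf Spo (p1,p2) c m r) d"
  shows "(c \<noteq> None \<and> d = Conf Dup (p1,p2) c m Star) \<or>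
    (\<exists>b w rr. tr p1 b w \<and> d = Conf Dup (p1,p2) (Some(b,w)) (Some(p2,Frown)) rr) \<or>
    (\<exists>b w. tr p2 b w \<and> d = Conf Dup (p2,p1) (Some(b,w)) (Some(p1,Frown)) Tick)"
  using assms by (cases rule: gmove.cases) auto

lemma mv_dup_cases:
  assumes "mv (Conf Dup (u,v) (Some(a,u')) (Some(vb,f)) r) d"
  shows "(a = tau \<and> d = Conf Spo (u',vb) None None Tick) \<or>
  (\<exists>v'. f = Frown \<and> tr vb a v' \<and> (d = Conf Spo (u',v') (Some(a,u')) (Some(v',Smile)) Star \<or>
       d = Conf Spo (u',v') None None Tick \<or> (Smile \<in> E \<and> d = Conf Spo (u,v) (Some(a,u')) (Some(v',Smile)) Star))) \<or>
  (\<exists>v'. tr vb tau v' \<and> (d = Conf Spo (u,v') (Some(a,u')) (Some(v',f)) Star \<or>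
       (f = Smile \<and> d = Conf Spo (u',v') None None Tick) \<or> (f \<in> E \<and> d = Conf Spo (u,v) (Some(a,u')) (Some(v',f)) Star)))"
  using assms by (cases rule: gmove.cases) auto

lemma RIs: "dup_wins tr tau E d \<Longrightarrow> dup_wins tr tau E (setr d r)"
  by (cases d) (simp add: RI)

lemma spo_sim:
  assumes o: "owner c = Spo" and w: "dup_wins tr tau E c'" and o': "owner c' = Spo"
    and sim: "\<And>d. mv c d \<Longrightarrow> \<exists>d' r. mv c' d' \<and> d = setr d' r"
  shows "dup_wins tr tau E c"
proof (rule G1[OF o], intro allI impI)
  fix d assume "mv c d"
  then obtain d' r where "mv c' d'" "d = setr d' r" using sim by blast
  then show "dup_wins tr tau E d" using G3[OF w o'] RIs by blast
qed

lemma from_dag: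
  assumes w: "dup_wins tr tau E (Conf Spo (p1,p2) None None r0)" and t: "tr p1 a sa"
  shows "dup_wins tr tau E (Conf Spo (p1,p2) (Some(a,sa)) (Some(p2,Frown)) r)"
proof (rule spo_sim[OF _ w])
  fix d assume "mv (Conf Spo (p1,p2) (Some(a,sa)) (Some(p2,Frown)) r) d"
  from mv_spo_cases[OF this] show "\<exists>d' r. mv (Conf Spo (p1,p2) None None r0) d' \<and> d = setr d' r"
  proof (elim disjE exE conjE)
    assume "d = Conf Dup (p1,p2) (Some(a,sa)) (Some(p2,Frown)) Star"
    moreover have "mv (Conf Spo (p1,p2) None None r0) (Conf Dup (p1,p2) (Some(a,sa)) (Some(p2,Frown)) Star)"
      using t by (simp add: gmove.S2a)
    ultimately show ?thesis by (metis setr.simps)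
  next
    fix b w rr assume a: "tr p1 b w" "d = Conf Dup (p1,p2) (Some(b,w)) (Some(p2,Frown)) rr"
    have "mv (Conf Spo (p1,p2) None None r0) (Conf Dup (p1,p2) (Some(b,w)) (Some(p2,Frown)) Star)"
      using a(1) by (simp add: gmove.S2a)
    then show ?thesis using a(2) by (metis setr.simps)
  next
    fix b w assume a: "tr p2 b w" "d = Conf Dup (p2,p1) (Some(b,w)) (Some(p1,Frown)) Tick"
    have "mv (Conf Spo (p1,p2) None None r0) (Conf Dup (p2,p1) (Some(b,w)) (Some(p1,Frown)) Tick)"
      using a(1) by (simp add: gmove.S3)
    then show ?thesis using a(2) by (metis setr.simps)
  qed
qed simp_all

lemma to_dag:
  assumes w: "dup_wins tr tau E (Conf Spo (p1,p2) (Some ch) (Some(p2,Frown)) r)"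
  shows "dup_wins tr tau E (Conf Spo (p1,p2) None None r0)"
proof (rule spo_sim[OF _ w])
  fix d assume "mv (Conf Spo (p1,p2) None None r0) d"
  from mv_spo_cases[OF this] show "\<exists>d' r'. mv (Conf Spo (p1,p2) (Some ch) (Some(p2,Frown)) r) d' \<and> d = setr d' r'"
  proof (elim disjE exE conjE)
    fix b w rr assume a: "tr p1 b w" "d = Conf Dup (p1,p2) (Some(b,w)) (Some(p2,Frown)) rr"
    show ?thesis
    proof (cases "ch = (b,w)")
      case True
      have "mv (Conf Spo (p1,p2) (Some ch) (Some(p2,Frown)) r) (Conf Dup (p1,p2) (Some ch) (Some(p2,Frown)) Star)"
        by (simp add: gmove.S1)
      then show ?thesis using a(2) True by (metis setr.simps)
    next
      case False
      have "mv (Conf Spo (p1,p2) (Some ch) (Some(p2,Frown)) r) (Conf Dup (p1,p2) (Some(b,w)) (Some(p2,Frown)) Tick)"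
        using a(1) False by (simp add: gmove.S2b)
      then show ?thesis using a(2) by (metis setr.simps)
    qed
  next
    fix b w assume a: "tr p2 b w" "d = Conf Dup (p2,p1) (Some(b,w)) (Some(p1,Frown)) Tick"
    have "mv (Conf Spo (p1,p2) (Some ch) (Some(p2,Frown)) r) (Conf Dup (p2,p1) (Some(b,w)) (Some(p1,Frown)) Tick)"
      using a(1) by (simp add: gmove.S3)
    then show ?thesis using a(2) by (metis setr.simps)
  qed simp
qed simp_all

abbreviation W where "W \<equiv> Wd tr tau E"

lemma W_I: "dup_wins tr tau E (Conf Spo (s,t) None None r) \<Longrightarrow> W s t"
  unfolding Wd_def by (rule RI)

lemma W_D: "W s t \<Longrightarrow> dup_wins tr tau E (Conf Spo (s,t) None None r)"
  unfolding Wd_def by (rule RI)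

lemma W_sym:
  assumes w: "W s t" shows "W t s"
proof -
  have w': "dup_wins tr tau E (Conf Spo (s,t) None None Star)" using w Wd_def by metis
  have "dup_wins tr tau E (Conf Spo (t,s) None None Star)"
  proof (rule spo_sim[OF _ w'])
    fix d assume "mv (Conf Spo (t,s) None None Star) d"
    from mv_spo_cases[OF this] show "\<exists>d' r. mv (Conf Spo (s,t) None None Star) d' \<and> d = setr d' r"
    proof (elim disjE exE conjE)
      fix b w rr assume a: "tr t b w" "d = Conf Dup (t,s) (Some(b,w)) (Some(s,Frown)) rr"
      have "mv (Conf Spo (s,t) None None Star) (Conf Dup (t,s) (Some(b,w)) (Some(s,Frown)) Tick)"
        using a(1) by (simp add: gmove.S3)
      then show ?thesis using a(2) by (metis setr.simps)
    next
      fix b w assume a: "tr s b w" "d = Conf Dup (s,t) (Some(b,w)) (Some(t,Frown)) Tick"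
      have "mv (Conf Spo (s,t) None None Star) (Conf Dup (s,t) (Some(b,w)) (Some(t,Frown)) Tick)"
        using a(1) by (simp add: gmove.S2b)
      then show ?thesis using a(2) by (metis setr.simps)
    qed simp
  qed simp_all
  then show ?thesis unfolding Wd_def .
qed

lemma T_flip:
  assumes dc: "dchain tr tau E D" and sm: "Smile \<notin> E" and ts: "tr s' a s'"
  shows "D = Conf Dup (s',v) (Some(a,s')) (Some(v,Smile)) r \<Longrightarrow>
         dup_wins tr tau E (Conf Dup (s',v) (Some(a,s')) (Some(v,Frown)) r)"
  using dc
proof (induction arbitrary: v r rule: dchain.induct)
  case (dc1 D D')
  have m: "mv (Conf Dup (s',v) (Some(a,s')) (Some(v,Smile)) r) D'" using dc1.hyps(1) dc1.prems by simp
  from mv_dup_cases[OF m] show ?case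
  proof (elim disjE exE conjE)
    assume a: "a = tau" "D' = Conf Spo (s',v) None None Tick"
    have "mv (Conf Dup (s',v) (Some(a,s')) (Some(v,Frown)) r) D'" using a by (simp add: gmove.D1)
    then show ?thesis using G2 dc1.hyps(2) by simp
  next
    fix v'' assume a: "tr v tau v''" "D' = Conf Spo (s',v'') None None Tick"
    have Dw: "dup_wins tr tau E (Conf Spo (s',v'') None None Tick)" using dc1.hyps(2) a(2) by simp
    have "dup_wins tr tau E (Conf Spo (s',v'') (Some(a,s')) (Some(v'',Frown)) Star)"
      using from_dag[OF Dw ts] .
    moreover have "mv (Conf Dup (s',v) (Some(a,s')) (Some(v,Frown)) r)
        (Conf Spo (s',v'') (Some(a,s')) (Some(v'',Frown)) Star)" using a(1) by (simp add: gmove.D3a)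
    ultimately show ?thesis using G2 by simp
  qed (use dc1.hyps(3) sm in auto)
next
  case (dc2 D D')
  have m: "mv (Conf Dup (s',v) (Some(a,s')) (Some(v,Smile)) r) D'" using dc2.hyps(1) dc2.prems by simp
  from mv_dup_cases[OF m] show ?case
  proof (elim disjE exE conjE)
    fix v'' assume a: "tr v tau v''" "D' = Conf Spo (s',v'') (Some(a,s')) (Some(v'',Smile)) Star"
    have F: "dup_wins tr tau E (Conf Dup (s',v'') (Some(a,s')) (Some(v'',Frown)) Star)"
      using dc2.IH a(2) by simp
    have Dw: "dup_wins tr tau E D'" using dc2.hyps(2) .
    let ?Y = "Conf Spo (s',v'') (Some(a,s')) (Some(v'',Frown)) Star"
    have "dup_wins tr tau E ?Y"
    proof (rule G1, simp, intro allI impI)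
      fix d assume md: "mv ?Y d"
      from mv_spo_cases[OF md] show "dup_wins tr tau E d"
      proof (elim disjE exE conjE)
        assume "d = Conf Dup (s',v'') (Some(a,s')) (Some(v'',Frown)) Star"
        then show ?thesis using F by simp
      next
        fix b w rr assume b: "tr s' b w" "d = Conf Dup (s',v'') (Some(b,w)) (Some(v'',Frown)) rr"
        show ?thesis
        proof (cases "(b,w) = (a,s')")
          case True
          then show ?thesis using RI[OF F, of rr] b(2) by simp
        next
          case False
          have "mv D' (Conf Dup (s',v'') (Some(b,w)) (Some(v'',Frown)) Tick)"
            using a(2) b(1) False by (auto intro!: gmove.S2b)
          then have "dup_wins tr tau E (Conf Dup (s',v'') (Some(b,w)) (Some(v'',Frown)) Tick)"
            using G3[OF Dw] a(2) by simp
          then show ?thesis using RI b(2) by simp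
        qed
      next
        fix b w assume b: "tr v'' b w" "d = Conf Dup (v'',s') (Some(b,w)) (Some(s',Frown)) Tick"
        have "mv D' d" using a(2) b by (simp add: gmove.S3)
        then show ?thesis using G3[OF Dw] a(2) by simp
      qed
    qed
    moreover have "mv (Conf Dup (s',v) (Some(a,s')) (Some(v,Frown)) r) ?Y" using a(1) by (simp add: gmove.D3a)
    ultimately show ?thesis using G2 by simp
  qed (use dc2.hyps(3) sm in auto)
qed

lemma post_W:
  assumes sm: "Smile \<notin> E" and X: "dup_wins tr tau E (Conf Spo (s',v) (Some(a,s')) (Some(v,Smile)) r)"
  shows "W s' v"
proof -
  let ?X = "Conf Spo (s',v) (Some(a,s')) (Some(v,Smile)) r"
  have "dup_wins tr tau E (Conf Spo (s',v) None None Star)"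
  proof (rule G1, simp, intro allI impI)
    fix d assume md: "mv (Conf Spo (s',v) None None Star) d"
    from mv_spo_cases[OF md] show "dup_wins tr tau E d"
    proof (elim disjE exE conjE)
      fix b w rr assume b: "tr s' b w" "d = Conf Dup (s',v) (Some(b,w)) (Some(v,Frown)) rr"
      show ?thesis
      proof (cases "(b,w) = (a,s')")
        case True
        have m1: "mv ?X (Conf Dup (s',v) (Some(a,s')) (Some(v,Smile)) Star)" by (simp add: gmove.S1)
        have w1: "dup_wins tr tau E (Conf Dup (s',v) (Some(a,s')) (Some(v,Smile)) Star)"
          using G3[OF X _ m1] by simp
        have "dchain tr tau E (Conf Dup (s',v) (Some(a,s')) (Some(v,Smile)) Star)"
          using SL[OF w1] by simp
        moreover have "tr s' a s'" using b(1) True by simp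
        ultimately have "dup_wins tr tau E (Conf Dup (s',v) (Some(a,s')) (Some(v,Frown)) Star)"
          using T_flip sm by blast
        then show ?thesis using RI b(2) True by simp
      next
        case False
        have "mv ?X (Conf Dup (s',v) (Some(b,w)) (Some(v,Frown)) Tick)"
          using b(1) False by (auto intro!: gmove.S2b)
        then have "dup_wins tr tau E (Conf Dup (s',v) (Some(b,w)) (Some(v,Frown)) Tick)"
          using G3[OF X] by simp
        then show ?thesis using RI b(2) by simp
      qed
    next
      fix b w assume b: "tr v b w" "d = Conf Dup (v,s') (Some(b,w)) (Some(s',Frown)) Tick"
      have "mv ?X d" using b by (simp add: gmove.S3)
      then show ?thesis using G3[OF X] by simp
    qed simp
  qed
  then show ?thesis unfolding Wd_def .
qed

lemma post_reach:
  assumes dc: "dchain tr tau E D"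
  shows "D = Conf Dup (p1,p2) (Some(a,s')) (Some(v,Smile)) r \<Longrightarrow> \<exists>t'. tau_steps tr tau v t' \<and> W s' t'"
  using dc
proof (induction arbitrary: p1 p2 v r rule: dchain.induct)
  case (dc1 D D')
  have m: "mv (Conf Dup (p1,p2) (Some(a,s')) (Some(v,Smile)) r) D'" using dc1.hyps(1) dc1.prems by simp
  from mv_dup_cases[OF m] show ?case
  proof (elim disjE exE conjE)
    assume a: "a = tau" "D' = Conf Spo (s',v) None None Tick"
    then have "W s' v" using W_I dc1.hyps(2) by simp
    then show ?thesis using tau_refl[of tr tau v] by blast
  next
    fix v'' assume a: "tr v tau v''" "D' = Conf Spo (s',v'') None None Tick"
    then have "W s' v''" using W_I dc1.hyps(2) by simp
    then show ?thesis using tau1[of tr v tau v'', OF a(1)] by blast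
  qed (use dc1.hyps(3) in auto)
next
  case (dc2 D D')
  have m: "mv (Conf Dup (p1,p2) (Some(a,s')) (Some(v,Smile)) r) D'" using dc2.hyps(1) dc2.prems by simp
  from mv_dup_cases[OF m] show ?case
  proof (elim disjE exE conjE)
    fix v'' assume a: "tr v tau v''" "D' = Conf Spo (p1,v'') (Some(a,s')) (Some(v'',Smile)) Star"
    then obtain t' where tt: "tau_steps tr tau v'' t'" "W s' t'" using dc2.IH by force
    then show ?thesis using tau_step[OF a(1) tt(1)] by blast
  next
    fix v'' assume a: "tr v tau v''" "D' = Conf Spo (p1,p2) (Some(a,s')) (Some(v'',Smile)) Star"
    then obtain t' where tt: "tau_steps tr tau v'' t'" "W s' t'" using dc2.IH by force
    then show ?thesis using tau_step[OF a(1) tt(1)] by blast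
  qed (use dc2.hyps(3) in auto)
qed


definition Concl :: "mode \<Rightarrow> mode \<Rightarrow> 's \<Rightarrow> 'a \<Rightarrow> 's \<Rightarrow> 's \<Rightarrow> bool" where
  "Concl x y s a s' v \<longleftrightarrow> (a = tau \<and> W s' v) \<or>
     (\<exists>t1 t2 t'. tau_steps tr tau v t1 \<and> (x = Mb \<longrightarrow> W s t1) \<and> tr t1 a t2 \<and>
        gstep tr tau y W s' t2 t' \<and> W s' t')"

lemma gstep_refl: "W s' v \<Longrightarrow> gstep tr tau y W s' v v"
  by (cases y) (simp_all add: gstep_Mo gstep_Mb tau_refl)

lemma Concl_step:
  assumes "tr v tau v''" "x = Mb \<Longrightarrow> W s v" "Concl x y s a s' v''"
  shows "Concl x y s a s' v"
  using assms(3) unfolding Concl_def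
proof (elim disjE exE conjE)
  assume a: "a = tau" "W s' v''"
  have "tau_steps tr tau v v" by (rule tau_refl)
  moreover have "x = Mb \<longrightarrow> W s v" using assms(2) by blast
  moreover have "tr v a v''" using a(1) assms(1) by simp
  moreover have "gstep tr tau y W s' v'' v''" using gstep_refl[OF a(2)] .
  ultimately show "(a = tau \<and> W s' v) \<or> (\<exists>t1 t2 t'. tau_steps tr tau v t1 \<and> (x = Mb \<longrightarrow> W s t1) \<and> tr t1 a t2 \<and>
        gstep tr tau y W s' t2 t' \<and> W s' t')" using a(2) by blast
next
  fix t1 t2 t' assume a: "tau_steps tr tau v'' t1" "x = Mb \<longrightarrow> W s t1" "tr t1 a t2"
        "gstep tr tau y W s' t2 t'" "W s' t'"
  have "tau_steps tr tau v t1" using tau_step[OF assms(1) a(1)] .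
  then show "(a = tau \<and> W s' v) \<or> (\<exists>t1 t2 t'. tau_steps tr tau v t1 \<and> (x = Mb \<longrightarrow> W s t1) \<and> tr t1 a t2 \<and>
        gstep tr tau y W s' t2 t' \<and> W s' t')" using a by blast
qed

lemma pre_concl:
  assumes dc: "dchain tr tau E D" and Fr: "Frown \<in> E \<Longrightarrow> x = Mo" and Sm: "Smile \<in> E \<Longrightarrow> y = Mo"
  shows "D = Conf Dup (s,p2) (Some(a,s')) (Some(v,Frown)) r \<Longrightarrow> (x = Mb \<Longrightarrow> W s v) \<Longrightarrow> Concl x y s a s' v"
  using dc
proof (induction arbitrary: p2 v r rule: dchain.induct)
  case (dc1 D D')
  have m: "mv (Conf Dup (s,p2) (Some(a,s')) (Some(v,Frown)) r) D'" using dc1.hyps(1) dc1.prems by simp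
  from mv_dup_cases[OF m] show ?case
  proof (elim disjE exE conjE)
    assume a: "a = tau" "D' = Conf Spo (s',v) None None Tick"
    then have "W s' v" using W_I dc1.hyps(2) by simp
    then show ?thesis using a(1) unfolding Concl_def by blast
  next
    fix v' assume a: "tr v a v'" "D' = Conf Spo (s',v') None None Tick"
    then have w: "W s' v'" using W_I dc1.hyps(2) by simp
    have "tau_steps tr tau v v" by (rule tau_refl)
    moreover have "x = Mb \<longrightarrow> W s v" using dc1.prems(2) by blast
    ultimately show ?thesis using a(1) w gstep_refl[OF w] unfolding Concl_def by blast
  qed (use dc1.hyps(3) in auto)
next
  case (dc2 D D')
  have m: "mv (Conf Dup (s,p2) (Some(a,s')) (Some(v,Frown)) r) D'" using dc2.hyps(1) dc2.prems by simp
  have hv: "x = Mb \<longrightarrow> W s v" using dc2.prems(2) by blast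
  from mv_dup_cases[OF m] show ?case
  proof (elim disjE exE conjE)
    fix v' assume a: "tr v a v'" "D' = Conf Spo (s',v') (Some(a,s')) (Some(v',Smile)) Star"
    have "dchain tr tau E (Conf Dup (s',v') (Some(a,s')) (Some(v',Smile)) Star)" using dc2.hyps(4) a(2) by simp
    then obtain t' where tt: "tau_steps tr tau v' t'" "W s' t'" using post_reach by blast
    have "y = Mb \<Longrightarrow> W s' v'"
    proof -
      assume "y = Mb"
      then have "Smile \<notin> E" using Sm by auto
      then show "W s' v'" using post_W dc2.hyps(2) a(2) by simp
    qed
    then have "gstep tr tau y W s' v' t'" using tt by (cases y) (simp_all add: gstep_Mo gstep_Mb)
    then show ?thesis using tau_refl[of tr tau v] hv a(1) tt(2) unfolding Concl_def by blast
  next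
    fix v' assume a: "tr v a v'" "Smile \<in> E" "D' = Conf Spo (s,p2) (Some(a,s')) (Some(v',Smile)) Star"
    have "dchain tr tau E (Conf Dup (s,p2) (Some(a,s')) (Some(v',Smile)) Star)" using dc2.hyps(4) a(3) by simp
    then obtain t' where tt: "tau_steps tr tau v' t'" "W s' t'" using post_reach by blast
    have "y = Mo" using Sm a(2) by simp
    then have "gstep tr tau y W s' v' t'" using tt by (simp add: gstep_Mo)
    then show ?thesis using tau_refl[of tr tau v] hv a(1) tt(2) unfolding Concl_def by blast
  next
    fix v'' assume a: "tr v tau v''" "D' = Conf Spo (s,v'') (Some(a,s')) (Some(v'',Frown)) Star"
    have "W s v''" using to_dag[of s v'' "(a,s')" Star Star] dc2.hyps(2) a(2) unfolding Wd_def by simp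
    then have "Concl x y s a s' v''" using dc2.IH a(2) by simp
    then show ?thesis using Concl_step[OF a(1)] dc2.prems(2) by blast
  next
    fix v'' assume a: "tr v tau v''" "Frown \<in> E" "D' = Conf Spo (s,p2) (Some(a,s')) (Some(v'',Frown)) Star"
    have "x = Mo" using Fr a(2) by simp
    then have "Concl x y s a s' v''" using dc2.IH a(3) by simp
    then show ?thesis using Concl_step[OF a(1)] dc2.prems(2) by blast
  qed (use dc2.hyps(3) in auto)
qed

lemma fwd:
  assumes Fr: "Frown \<in> E \<Longrightarrow> x = Mo" and Sm: "Smile \<in> E \<Longrightarrow> y = Mo"
  shows "generic_bisim tr tau x y W"
  unfolding generic_bisim_def
proof (intro conjI allI impI)
  show "symp W" unfolding symp_def using W_sym by blast
  fix s t a s' assume st: "W s t \<and> tr s a s'"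
  let ?D = "Conf Dup (s,t) (Some(a,s')) (Some(t,Frown)) Star"
  have "mv (Conf Spo (s,t) None None Star) ?D" using st by (simp add: gmove.S2a)
  moreover have "dup_wins tr tau E (Conf Spo (s,t) None None Star)" using st Wd_def by metis
  ultimately have "dup_wins tr tau E ?D" using G3 by simp
  then have "dchain tr tau E ?D" using SL by simp
  then have "Concl x y s a s' t" using pre_concl[OF _ Fr Sm] st by blast
  then show "(a = tau \<and> W s' t) \<or>
        (\<exists>t' t1 t2. gstep tr tau x W s t t1 \<and> tr t1 a t2 \<and> gstep tr tau y W s' t2 t' \<and> W s' t')"
    unfolding Concl_def
  proof (elim disjE exE conjE)
    fix t1 t2 t' assume a: "tau_steps tr tau t t1" "x = Mb \<longrightarrow> W s t1" "tr t1 a t2"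
        "gstep tr tau y W s' t2 t'" "W s' t'"
    have "gstep tr tau x W s t t1" using a(1,2) st by (cases x) (simp_all add: gstep_Mo gstep_Mb)
    then show ?thesis using a by blast
  qed simp
qed

end



locale GB =
  fixes tr :: "'s \<Rightarrow> 'a \<Rightarrow> 's \<Rightarrow> bool" and tau :: 'a and x y :: mode
begin

sublocale GM tr tau "Eset x y" .

abbreviation Q where "Q \<equiv> QQ tr tau x y"

lemma mv_spo_some:
  assumes "mv (Conf Spo (p1,p2) (Some ch) m r) d"
  shows "d = Conf Dup (p1,p2) (Some ch) m Star \<or>
    (\<exists>b w. tr p1 b w \<and> d = Conf Dup (p1,p2) (Some(b,w)) (Some(p2,Frown)) Tick) \<or>
    (\<exists>b w. tr p2 b w \<and> d = Conf Dup (p2,p1) (Some(b,w)) (Some(p1,Frown)) Tick)"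
  using assms by (cases rule: gmove.cases) auto

lemma Kpost:
  assumes "pathP tr tau (\<lambda>u. y = Mb \<longrightarrow> Q s' u) w t'"
  shows "Q s' t' \<Longrightarrow> tr v tau w \<Longrightarrow> Q p1 p2 \<Longrightarrow> (y = Mb \<Longrightarrow> p1 = s' \<and> p2 = v) \<Longrightarrow>
     \<exists>n. fin tr tau x y (Conf Dup (p1,p2) (Some(a,s')) (Some(v,Smile)) r) n"
  using assms(1)
proof (induction arbitrary: v p1 p2 r rule: pathP.induct)
  case (pr u)
  have "mv (Conf Dup (p1,p2) (Some(a,s')) (Some(v,Smile)) r) (Conf Spo (s',u) None None Tick)"
    using pr.prems(2) by (simp add: gmove.D3b)
  then have "fin tr tau x y (Conf Dup (p1,p2) (Some(a,s')) (Some(v,Smile)) r) 0"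
    using pr.prems(1) by (simp add: fin.f0)
  then show ?case by blast
next
  case (ps u w2 v2)
  show ?case
  proof (cases y)
    case Mb
    have Qu: "Q s' u" using ps.hyps(1) Mb by simp
    have p: "p1 = s'" "p2 = v" using ps.prems(4) Mb by auto
    obtain n where n: "fin tr tau x y (Conf Dup (s',u) (Some(a,s')) (Some(u,Smile)) Star) n"
      using ps.IH[of u s' u Star] ps.hyps(2) ps.prems(1) Qu Mb by blast
    have "mv (Conf Dup (p1,p2) (Some(a,s')) (Some(v,Smile)) r) (Conf Spo (s',u) (Some(a,s')) (Some(u,Smile)) Star)"
      using ps.prems(2) p by (simp add: gmove.D3a)
    then have "fin tr tau x y (Conf Dup (p1,p2) (Some(a,s')) (Some(v,Smile)) r) (Suc n)"
      using Qu n by (simp add: fin.fS)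
    then show ?thesis by blast
  next
    case Mo
    obtain n where n: "fin tr tau x y (Conf Dup (p1,p2) (Some(a,s')) (Some(u,Smile)) Star) n"
      using ps.IH[of u p1 p2 Star] ps.hyps(2) ps.prems(1,3) Mo by blast
    have "Smile \<in> Eset x y" using Mo Smile_E by blast
    then have "mv (Conf Dup (p1,p2) (Some(a,s')) (Some(v,Smile)) r) (Conf Spo (p1,p2) (Some(a,s')) (Some(u,Smile)) Star)"
      using ps.prems(2) by (simp add: gmove.D3c)
    then have "fin tr tau x y (Conf Dup (p1,p2) (Some(a,s')) (Some(v,Smile)) r) (Suc n)"
      using ps.prems(3) n by (simp add: fin.fS)
    then show ?thesis by blast
  qed
qed

lemma Kpre:
  assumes "pathP tr tau (\<lambda>u. x = Mb \<longrightarrow> Q s u) v t1"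
  shows "(a = tau \<and> Q s' t1) \<or>
       (\<exists>t2 t'. tr t1 a t2 \<and> pathP tr tau (\<lambda>u. y = Mb \<longrightarrow> Q s' u) t2 t' \<and> Q s' t') \<Longrightarrow> Q s p2 \<Longrightarrow> (x = Mb \<Longrightarrow> p2 = v) \<Longrightarrow>
     \<exists>n. fin tr tau x y (Conf Dup (s,p2) (Some(a,s')) (Some(v,Frown)) r) n"
  using assms(1)
proof (induction arbitrary: p2 r rule: pathP.induct)
  case (pr u)
  let ?D = "Conf Dup (s,p2) (Some(a,s')) (Some(u,Frown)) r"
  from pr.prems(1) show ?case
  proof (elim disjE exE conjE)
    assume a: "a = tau" "Q s' u"
    have "mv ?D (Conf Spo (s',u) None None Tick)" using a by (simp add: gmove.D1)
    then show ?thesis using a(2) fin.f0 by fastforce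
  next
    fix t2 t' assume a: "tr u a t2" "pathP tr tau (\<lambda>u. y = Mb \<longrightarrow> Q s' u) t2 t'" "Q s' t'"
    from a(2) show ?thesis
    proof (cases rule: pathP.cases)
      case pr
      have "mv ?D (Conf Spo (s',t2) None None Tick)" using a(1) by (simp add: gmove.D2b)
      then show ?thesis using a(3) pr fin.f0 by fastforce
    next
      case (ps w)
      show ?thesis
      proof (cases y)
        case Mb
        have Qt2: "Q s' t2" using ps(1) Mb by simp
        obtain n where n: "fin tr tau x y (Conf Dup (s',t2) (Some(a,s')) (Some(t2,Smile)) Star) n"
          using Kpost[OF ps(3) a(3) ps(2) Qt2] Mb by blast
        have "mv ?D (Conf Spo (s',t2) (Some(a,s')) (Some(t2,Smile)) Star)" using a(1) by (simp add: gmove.D2a)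
        then have "fin tr tau x y ?D (Suc n)" using Qt2 n by (simp add: fin.fS)
        then show ?thesis by blast
      next
        case Mo
        obtain n where n: "fin tr tau x y (Conf Dup (s,p2) (Some(a,s')) (Some(t2,Smile)) Star) n"
          using Kpost[OF ps(3) a(3) ps(2) pr.prems(2)] Mo by blast
        have "Smile \<in> Eset x y" using Mo Smile_E by blast
        then have "mv ?D (Conf Spo (s,p2) (Some(a,s')) (Some(t2,Smile)) Star)" using a(1) by (simp add: gmove.D2c)
        then have "fin tr tau x y ?D (Suc n)" using pr.prems(2) n by (simp add: fin.fS)
        then show ?thesis by blast
      qed
    qed
  qed
next
  case (ps u w v2)
  let ?D = "Conf Dup (s,p2) (Some(a,s')) (Some(u,Frown)) r"
  show ?case
  proof (cases x)
    case Mb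
    have Qw: "Q s w" using pathP_hd[OF ps.hyps(3)] Mb by simp
    obtain n where n: "fin tr tau x y (Conf Dup (s,w) (Some(a,s')) (Some(w,Frown)) Star) n"
      using ps.IH[of w Star] ps.prems(1) Qw by blast
    have "mv ?D (Conf Spo (s,w) (Some(a,s')) (Some(w,Frown)) Star)" using ps.hyps(2) by (simp add: gmove.D3a)
    then have "fin tr tau x y ?D (Suc n)" using Qw n by (simp add: fin.fS)
    then show ?thesis by blast
  next
    case Mo
    obtain n where n: "fin tr tau x y (Conf Dup (s,p2) (Some(a,s')) (Some(w,Frown)) Star) n"
      using ps.IH[of p2 Star] ps.prems(1,2) Mo by blast
    have "Frown \<in> Eset x y" using Mo Frown_E by blast
    then have "mv ?D (Conf Spo (s,p2) (Some(a,s')) (Some(w,Frown)) Star)" using ps.hyps(2) by (simp add: gmove.D3c)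
    then have "fin tr tau x y ?D (Suc n)" using ps.prems(2) n by (simp add: fin.fS)
    then show ?thesis by blast
  qed
qed

lemma K:
  assumes "Q s t" "tr s a s'"
  shows "\<exists>n. fin tr tau x y (Conf Dup (s,t) (Some(a,s')) (Some(t,Frown)) r) n"
  using SP[OF assms]
proof (elim disjE exE conjE)
  fix t' assume a: "a = tau" "pathP tr tau (\<lambda>u. x = Mb \<longrightarrow> Q s u) t t'" "Q s' t'"
  show ?thesis using Kpre[OF a(2), of a s' t r] a(1,3) assms(1) by blast
next
  fix t1 t2 t' assume a: "pathP tr tau (\<lambda>u. x = Mb \<longrightarrow> Q s u) t t1" "tr t1 a t2"
    "pathP tr tau (\<lambda>u. y = Mb \<longrightarrow> Q s' u) t2 t'" "Q s' t'"
  show ?thesis using Kpre[OF a(1), of a s' t r] a(2,3,4) assms(1) by blast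
qed

definition Lf where "Lf c = (LEAST n. fin tr tau x y c n)"

definition Inv where "Inv = {c. (\<exists>p1 p2. c = Conf Spo (p1,p2) None None Tick \<and> Q p1 p2) \<or>
   (owner c = Dup \<and> (\<exists>n. fin tr tau x y c n)) \<or>
   (\<exists>p1 p2 ch m r. c = Conf Spo (p1,p2) (Some ch) m r \<and> Q p1 p2 \<and>
       (\<exists>n. fin tr tau x y (Conf Dup (p1,p2) (Some ch) m Star) n))}"

definition mu where "mu c = (if owner c = Dup then 2 * Lf c else if chal c = None then 0 else 2 * Lf (s1 c) + 1)"

lemma Lf_le: "fin tr tau x y c n \<Longrightarrow> Lf c \<le> n"
  unfolding Lf_def by (rule Least_le)

lemma Lf_fin: "fin tr tau x y c n \<Longrightarrow> fin tr tau x y c (Lf c)"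
  unfolding Lf_def by (rule LeastI)

lemma bwd:
  assumes "Q s t"
  shows "dup_wins tr tau (Eset x y) (Conf Spo (s,t) None None Tick)"
proof (rule inv_wins[where Inv = Inv and \<mu> = mu])
  show "Conf Spo (s,t) None None Tick \<in> Inv" using assms unfolding Inv_def by blast
next
  fix c c' assume c: "c \<in> Inv" and o: "owner c = Spo" and m: "mv c c'"
  show "c' \<in> Inv \<and> (rew c = Star \<and> rew c' = Star \<longrightarrow> mu c' < mu c)"
  proof -
    consider (A) p1 p2 where "c = Conf Spo (p1,p2) None None Tick" "Q p1 p2"
      | (C) p1 p2 ch mm r n where "c = Conf Spo (p1,p2) (Some ch) mm r" "Q p1 p2"
           "fin tr tau x y (Conf Dup (p1,p2) (Some ch) mm Star) n"
      using c o unfolding Inv_def by auto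
    then show ?thesis
    proof cases
      case A
      from mv_spo_cases[OF m[unfolded A(1)]] show ?thesis
      proof (elim disjE exE conjE)
        fix b w rr assume a: "tr p1 b w" "c' = Conf Dup (p1,p2) (Some(b,w)) (Some(p2,Frown)) rr"
        then show ?thesis using K[OF A(2) a(1)] A(1) unfolding Inv_def by auto
      next
        fix b w assume a: "tr p2 b w" "c' = Conf Dup (p2,p1) (Some(b,w)) (Some(p1,Frown)) Tick"
        then show ?thesis using K[OF QQ_sym[OF A(2)] a(1)] A(1) unfolding Inv_def by auto
      qed (use A in simp)
    next
      case C
      from mv_spo_some[OF m[unfolded C(1)]] show ?thesis
      proof (elim disjE exE conjE)
        assume a: "c' = Conf Dup (p1,p2) (Some ch) mm Star"
        have "c' \<in> Inv" using a C(3) unfolding Inv_def by auto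
        moreover have "mu c' < mu c" using a C(1) unfolding mu_def by simp
        ultimately show ?thesis by blast
      next
        fix b w assume a: "tr p1 b w" "c' = Conf Dup (p1,p2) (Some(b,w)) (Some(p2,Frown)) Tick"
        then show ?thesis using K[OF C(2) a(1)] unfolding Inv_def by auto
      next
        fix b w assume a: "tr p2 b w" "c' = Conf Dup (p2,p1) (Some(b,w)) (Some(p1,Frown)) Tick"
        then show ?thesis using K[OF QQ_sym[OF C(2)] a(1)] unfolding Inv_def by auto
      qed
    qed
  qed
next
  fix c assume c: "c \<in> Inv" and o: "owner c = Dup"
  then obtain n where "fin tr tau x y c n" unfolding Inv_def by auto
  then have fL: "fin tr tau x y c (Lf c)" by (rule Lf_fin)
  show "\<exists>c'. mv c c' \<and> c' \<in> Inv \<and> (rew c = Star \<and> rew c' = Star \<longrightarrow> mu c' < mu c)"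
  proof (cases "Lf c")
    case 0
    with fL have "fin tr tau x y c 0" by simp
    then show ?thesis
    proof (cases rule: fin.cases)
      case (f0 p1 p2)
      then show ?thesis unfolding Inv_def by fastforce
    qed
  next
    case (Suc k)
    with fL have "fin tr tau x y c (Suc k)" by simp
    then show ?thesis
    proof (cases rule: fin.cases)
      case (fS p1 p2 ch m r)
      let ?C = "Conf Spo (p1,p2) (Some ch) m r"
      have "?C \<in> Inv" using fS unfolding Inv_def by blast
      moreover have "mu ?C < mu c"
        using Lf_le[OF fS(4)] Suc o unfolding mu_def by simp
      ultimately show ?thesis using fS(1) by blast
    qed
  qed
qed

end

theorem theorem5p2:
  fixes tr :: "'s \<Rightarrow> 'a \<Rightarrow> 's \<Rightarrow> bool" and tau :: 'a
    and x y :: mode and s t :: 's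
  shows "gbisimilar tr tau x y s t \<longleftrightarrow> game_equiv tr tau (Eset x y) s t"
proof
  assume "gbisimilar tr tau x y s t"
  then obtain R where R: "generic_bisim tr tau x y R" "R s t" unfolding gbisimilar_def by blast
  have "QQ tr tau x y s t" using semi_QQ[OF bisim_semi[OF R(1)] R(2)] .
  then have "dup_wins tr tau (Eset x y) (Conf Spo (s,t) None None Tick)" by (rule GB.bwd)
  then show "game_equiv tr tau (Eset x y) s t" unfolding game_equiv_def by (rule GM.RI)
next
  assume g: "game_equiv tr tau (Eset x y) s t"
  have "generic_bisim tr tau x y (Wd tr tau (Eset x y))"
    by (rule GM.fwd) (simp_all add: Frown_E Smile_E)
  moreover have "Wd tr tau (Eset x y) s t" using g unfolding game_equiv_def Wd_def .
  ultimately show "gbisimilar tr tau x y s t" unfolding gbisimilar_def by blast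
qed

end
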